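(* Let $\mathbf{B}$ be the interaction matrix of a $q$-spin system and $\Delta\geq3$. Then: (1) There is a one-to-one correspondence between the fixpoints of the tree recursions and the critical points of $\Phi$ (both considered for $R_i\geq0$, $C_j\geq0$ up to scaling by a positive constant). (2) The transformation $(\mathbf{r},\mathbf{c})\mapsto(\boldsymbol{\alpha},\boldsymbol{\beta})$ given by $\alpha_i=R_i^{\Delta/(\Delta-1)}/\sum_{i'}R_{i'}^{\Delta/(\Delta-1)}$ and $\beta_j=C_j^{\Delta/(\Delta-1)}/\sum_{j'}C_{j'}^{\Delta/(\Delta-1)}$ yields a one-to-one correspondence between the critical points of $\Phi$ and the critical points of $\Psi_1$ in the region $\{\alpha_i\geq0,\beta_j\geq0,\sum_i\alpha_i=1,\sum_j\beta_j=1\}$. (3) For corresponding critical points $(\mathbf{r},\mathbf{c})$ and $(\boldsymbol{\alpha},\boldsymbol{\beta})$, $\Phi(\mathbf{r},\mathbf{c})=\Psi_1(\boldsymbol{\alpha},\boldsymbol{\beta})$. (4) If $\mathbf{B}$ is ergodic, the local maxima of $\Phi$ and of $\Psi_1$ occur at critical points, i.e., there are no local maxima on the boundary (every local maximum has all $R_i,C_j>0$, respectively all $\alpha_i,\beta_j>0$).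
   Context: $\mathbf{B}=(B_{ij})$ is a symmetric $q\times q$ matrix with nonnegative entries (irreducible, as a standing assumption); ergodic means irreducible and aperiodic. Let $p=\Delta/(\Delta-1)$. For nonnegative $\mathbf{r}=(R_1,\dots,R_q)$, $\mathbf{c}=(C_1,\dots,C_q)$, $\Phi(\mathbf{r},\mathbf{c})$ is defined by $\exp(\Phi(\mathbf{r},\mathbf{c})/\Delta)=\frac{\mathbf{r}^{\intercal}\mathbf{B}\mathbf{c}}{\|\mathbf{r}\|_p\|\mathbf{c}\|_p}$. The tree recursions are $\hat R_i\propto(\sum_{j}B_{ij}C_j)^{\Delta-1}$, $\hat C_j\propto(\sum_{i}B_{ij}R_i)^{\Delta-1}$ (proportionality constants independent of $i$, resp. $j$); a fixpoint is $(\mathbf{r},\mathbf{c})$ with $\hat R_i\propto R_i$ and $\hat C_j\propto C_j$ for all $i,j$. $\Psi_1$ is defined on $\triangle_q\times\triangle_q$ ($\triangle_q$ the probability simplex) by $\Psi_1(\boldsymbol{\alpha},\boldsymbol{\beta})=\max_{\mathbf{x}}[(\Delta-1)(\sum_i\alpha_i\ln\alpha_i+\sum_j\beta_j\ln\beta_j)+\Delta\sum_{i,j}x_{ij}(\ln B_{ij}-\ln x_{ij})]$ over nonnegative $\mathbf{x}\in\mathbb{R}^{q\times q}$ with $\sum_jx_{ij}=\alpha_i$, $\sum_ix_{ij}=\beta_j$ (conventions $\ln0=-\infty$, $0\ln0=0$); it is the exponential growth rate $\lim_n\frac1n\log\mathbf{E}[Z^{\boldsymbol{\alpha},\boldsymbol{\beta}}_G]$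 of the expected total weight of configurations with spin frequencies $\boldsymbol{\alpha}$ on one side and $\boldsymbol{\beta}$ on the other side of a random $\Delta$-regular bipartite graph (union of $\Delta$ random perfect matchings). *)

theory Defs
  imports "HOL-Analysis.Analysis"
begin

text \<open>Spin vectors and the interaction matrix are indexed by a finite type 'q (the q spins).\<close>

definition pexp :: "nat \<Rightarrow> real" where
  "pexp \<Delta> = real \<Delta> / (real \<Delta> - 1)"

definition pnorm :: "real \<Rightarrow> real^'q \<Rightarrow> real" where
  "pnorm p r = (\<Sum>i\<in>UNIV. \<bar>r$i\<bar> powr p) powr (1 / p)"

definition Phi :: "real^'q^'q \<Rightarrow> nat \<Rightarrow> ((real^'q) \<times> (real^'q)) \<Rightarrow> ereal" where
  "Phi B \<Delta> rc =
     (let r = fst rc; c = snd rc;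
          z = (r \<bullet> (B *v c)) / (pnorm (pexp \<Delta>) r * pnorm (pexp \<Delta>) c)
      in if z > 0 then ereal (real \<Delta> * ln z) else -\<infinity>)"

definition PhiDom :: "((real^'q) \<times> (real^'q)) set" where
  "PhiDom = {(r, c). (\<forall>i. 0 \<le> r$i) \<and> (\<forall>j. 0 \<le> c$j) \<and> r \<noteq> 0 \<and> c \<noteq> 0}"

definition SimDom :: "((real^'q) \<times> (real^'q)) set" where
  "SimDom = {(a, b). (\<forall>i. 0 \<le> a$i) \<and> (\<Sum>i\<in>UNIV. a$i) = 1 \<and>
                      (\<forall>j. 0 \<le> b$j) \<and> (\<Sum>j\<in>UNIV. b$j) = 1}"

definition xlogterm :: "real \<Rightarrow> real \<Rightarrow> ereal" where
  "xlogterm b x = (if x = 0 then 0 else if b = 0 then -\<infinity> else ereal (x * (ln b - ln x)))"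

definition Psi1 :: "real^'q^'q \<Rightarrow> nat \<Rightarrow> ((real^'q) \<times> (real^'q)) \<Rightarrow> ereal" where
  "Psi1 B \<Delta> ab =
     (let a = fst ab; b = snd ab
      in ereal ((real \<Delta> - 1) * ((\<Sum>i\<in>UNIV. a$i * ln (a$i)) + (\<Sum>j\<in>UNIV. b$j * ln (b$j))))
         + ereal (real \<Delta>) *
           (SUP x \<in> {x :: real^'q^'q. (\<forall>i j. 0 \<le> x$i$j) \<and> (\<forall>i. (\<Sum>j\<in>UNIV. x$i$j) = a$i)
                                      \<and> (\<forall>j. (\<Sum>i\<in>UNIV. x$i$j) = b$j)}.
              (\<Sum>i\<in>UNIV. \<Sum>j\<in>UNIV. xlogterm (B$i$j) (x$i$j))))"

definition Tmap :: "nat \<Rightarrow> ((real^'q) \<times> (real^'q)) \<Rightarrow> ((real^'q) \<times> (real^'q))" where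
  "Tmap \<Delta> rc =
     (let p = pexp \<Delta>; r = fst rc; c = snd rc
      in ((\<chi> i. r$i powr p / (\<Sum>i'\<in>UNIV. r$i' powr p)),
          (\<chi> j. c$j powr p / (\<Sum>j'\<in>UNIV. c$j' powr p))))"

definition tree_fixpoint :: "real^'q^'q \<Rightarrow> nat \<Rightarrow> real^'q \<Rightarrow> real^'q \<Rightarrow> bool" where
  "tree_fixpoint B \<Delta> r c \<longleftrightarrow>
     (\<exists>k>0. \<forall>i. (\<Sum>j\<in>UNIV. B$i$j * c$j) ^ (\<Delta> - 1) = k * r$i) \<and>
     (\<exists>\<mu>>0. \<forall>j. (\<Sum>i\<in>UNIV. B$i$j * r$i) ^ (\<Delta> - 1) = \<mu> * c$j)"

text \<open>Critical (stationary) point of an extended-real valued function f on a convex set K: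
  f finite at p, and in every feasible direction q - p (q in K) the upper one-sided
  directional derivative is at most 0.  For directions that are feasible both ways this forces
  the derivative to vanish; at boundary points it forces one-sided derivatives to be <= 0
  (possibly -infinity).\<close>
definition crit_point :: "('a::real_vector \<Rightarrow> ereal) \<Rightarrow> 'a set \<Rightarrow> 'a \<Rightarrow> bool" where
  "crit_point f K p \<longleftrightarrow> p \<in> K \<and> f p \<noteq> -\<infinity> \<and> f p \<noteq> \<infinity> \<and>
     (\<forall>q\<in>K. \<forall>\<epsilon>>0. \<forall>\<^sub>F t in at_right 0. f (p + t *\<^sub>R (q - p)) \<le> f p + ereal (\<epsilon> * t))"

definition local_max :: "('a::metric_space \<Rightarrow> ereal) \<Rightarrow> 'a set \<Rightarrow> 'a \<Rightarrow> bool" where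
  "local_max f K p \<longleftrightarrow> p \<in> K \<and> f p \<noteq> -\<infinity> \<and>
     (\<exists>e>0. \<forall>p'\<in>K. dist p' p < e \<longrightarrow> f p' \<le> f p)"

fun mpow :: "real^'q^'q \<Rightarrow> nat \<Rightarrow> real^'q^'q" where
  "mpow B 0 = mat 1"
| "mpow B (Suc k) = B ** mpow B k"

definition irreducible_mat :: "real^'q^'q \<Rightarrow> bool" where
  "irreducible_mat B \<longleftrightarrow> (\<forall>i j. \<exists>k. 0 < mpow B k $ i $ j)"

definition aperiodic_mat :: "real^'q^'q \<Rightarrow> bool" where
  "aperiodic_mat B \<longleftrightarrow> (\<forall>i. Gcd {k::nat. 0 < k \<and> 0 < mpow B k $ i $ i} = 1)"

definition ergodic_mat :: "real^'q^'q \<Rightarrow> bool" where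
  "ergodic_mat B \<longleftrightarrow> irreducible_mat B \<and> aperiodic_mat B"

end

theory Submission
  imports Defs "HOL-Real_Asymp.Real_Asymp"
begin

lemma deriv_quot:
  assumes "(g has_real_derivative Dg) (at_right 0)"
  shows "((\<lambda>t. (g t - g 0) / t) \<longlongrightarrow> Dg) (at_right 0)"
  using assms unfolding has_field_derivative_iff by simp

lemma crit_deriv_iff:
  assumes "(g has_real_derivative Dg) (at_right 0)"
  shows "(\<forall>\<epsilon>>0. \<forall>\<^sub>F t in at_right 0. g t \<le> g 0 + \<epsilon>*t) \<longleftrightarrow> Dg \<le> 0"
proof
  assume H: "\<forall>\<epsilon>>0. \<forall>\<^sub>F t in at_right 0. g t \<le> g 0 + \<epsilon>*t"
  show "Dg \<le> 0"
  proof (rule ccontr)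
    assume "\<not> Dg \<le> 0"
    hence "Dg/2 > 0" by simp
    from H[rule_format, OF this] have e1: "\<forall>\<^sub>F t in at_right 0. g t \<le> g 0 + Dg/2*t" .
    have "\<forall>\<^sub>F t in at_right 0. (g t - g 0)/t > Dg/2"
      using deriv_quot[OF assms] \<open>\<not> Dg \<le> 0\<close> by (intro order_tendstoD) auto
    moreover have "\<forall>\<^sub>F t::real in at_right 0. t > 0" by (simp add: eventually_at_right_less)
    ultimately have "\<forall>\<^sub>F t in at_right (0::real). False" using e1
      by eventually_elim (auto simp: field_simps)
    thus False by simp
  qed
next
  assume "Dg \<le> 0"
  show "\<forall>\<epsilon>>0. \<forall>\<^sub>F t in at_right 0. g t \<le> g 0 + \<epsilon>*t"
  proof (intro allI impI)
    fix \<epsilon> :: real assume "\<epsilon> > 0"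
    have "\<forall>\<^sub>F t in at_right 0. (g t - g 0)/t < \<epsilon>"
      using \<open>Dg \<le> 0\<close> \<open>\<epsilon>>0\<close> by (intro order_tendstoD(2)[OF deriv_quot[OF assms]]) auto
    moreover have "\<forall>\<^sub>F t::real in at_right 0. t > 0" by (simp add: eventually_at_right_less)
    ultimately show "\<forall>\<^sub>F t in at_right 0. g t \<le> g 0 + \<epsilon>*t"
      by eventually_elim (auto simp: field_simps)
  qed
qed

lemma sing_contra:
  assumes g: "(g has_real_derivative Dg) (at_right 0)"
    and hg: "\<forall>\<^sub>F t in at_right 0. h t = g t + K * (t * ln t)"
    and h0: "h 0 = g 0"
    and H: "\<forall>\<epsilon>>0. \<forall>\<^sub>F t in at_right 0. h t \<le> h 0 + \<epsilon>*t"
  shows "K \<ge> 0 \<and> (K = 0 \<longrightarrow> Dg \<le> 0)"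
proof
  show "K \<ge> 0"
  proof (rule ccontr)
    assume "\<not> K \<ge> 0"
    hence K: "K < 0" by simp
    have q: "\<forall>\<^sub>F t in at_right 0. (g t - g 0)/t > Dg - 1"
      using deriv_quot[OF g] by (intro order_tendstoD) auto
    have "filterlim (\<lambda>t::real. - ln t) at_top (at_right 0)" by real_asymp
    hence "filterlim (\<lambda>t::real. (-K) * (- ln t)) at_top (at_right 0)"
      using K by (intro filterlim_tendsto_pos_mult_at_top[OF tendsto_const]) auto
    hence l: "\<forall>\<^sub>F t in at_right 0. (-K) * (- ln t) > 2 - Dg"
      by (simp add: filterlim_at_top_dense)
    have tp: "\<forall>\<^sub>F t::real in at_right 0. t > 0" by (simp add: eventually_at_right_less)
    have H1: "\<forall>\<^sub>F t in at_right 0. h t \<le> h 0 + 1*t" using H[rule_format, of 1] by simp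
    with q l hg tp have "\<forall>\<^sub>F t in at_right (0::real). False"
    proof eventually_elim
      case (elim t)
      have a: "g t - g 0 > (Dg - 1) * t" using elim by (simp add: field_simps)
      have "t*((-K)*(-ln t)) > t*(2 - Dg)" using elim by (intro mult_strict_left_mono) auto
      hence b: "K * (t * ln t) > (2 - Dg) * t" by (simp add: algebra_simps)
      have "h t > g 0 + t" using a b elim by (simp add: algebra_simps)
      thus False using elim h0 by simp
    qed
    thus False by simp
  qed
next
  show "K = 0 \<longrightarrow> Dg \<le> 0"
  proof
    assume "K = 0"
    have "\<forall>\<epsilon>>0. \<forall>\<^sub>F t in at_right 0. g t \<le> g 0 + \<epsilon>*t"
    proof (intro allI impI)
      fix \<epsilon> :: real assume "\<epsilon>>0"
      from H[rule_format, OF this] hg show "\<forall>\<^sub>F t in at_right 0. g t \<le> g 0 + \<epsilon>*t"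
        by eventually_elim (simp add: \<open>K=0\<close> h0)
    qed
    thus "Dg \<le> 0" using crit_deriv_iff[OF g] by simp
  qed
qed

definition sx :: "nat \<Rightarrow> real" where "sx D = (real D - 1) / real D"

locale spin =
  fixes B :: "real^'q^'q" and D :: nat
  assumes D3: "3 \<le> D" and Bnn: "\<And>i j. 0 \<le> B$i$j"
begin

abbreviation "pp \<equiv> pexp D"
abbreviation "ss \<equiv> sx D"

lemma Dpos: "real D > 2" using D3 by simp
lemma pp_eq: "pp = real D / (real D - 1)" by (simp add: pexp_def)
lemma pp_gt1: "pp > 1" using Dpos by (simp add: pp_eq)
lemma ss_pos: "ss > 0" using Dpos by (simp add: sx_def)
lemma ss_lt1: "ss < 1" using Dpos by (simp add: sx_def)
lemma ss_pp: "ss * pp = 1" using Dpos by (simp add: sx_def pp_eq)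
lemma inv_pp: "1 / pp = ss" using Dpos by (simp add: sx_def pp_eq)
lemma pp_m1: "pp - 1 = 1 / (real D - 1)" using Dpos by (simp add: pp_eq field_simps)
lemma ss_pm1: "ss * (pp - 1) = 1 - ss" using Dpos by (simp add: sx_def pp_eq field_simps)
lemma Dm1: "real D - 1 = real D * ss" using Dpos by (simp add: sx_def)
lemma two_ss: "2 * ss > 1" using Dpos by (simp add: sx_def field_simps)
lemma real_Dm1: "real (D - 1) = real D - 1" using D3 by simp
lemma pm1_Dm1: "(pp - 1) * real (D - 1) = 1" using Dpos by (simp add: pp_m1 real_Dm1)

lemma powr_pp_ss: "0 \<le> x \<Longrightarrow> (x powr pp) powr ss = x"
  by (simp add: powr_powr ss_pp[unfolded mult.commute[of ss]] powr_one)
lemma powr_ss_pp: "0 \<le> x \<Longrightarrow> (x powr ss) powr pp = x"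
  by (simp add: powr_powr ss_pp powr_one)

lemma sum_pos_vec:
  fixes r :: "real^'n"
  assumes "\<forall>i. 0 \<le> r$i" "r \<noteq> 0"
  shows "(\<Sum>i\<in>UNIV. r$i powr a) > 0"
proof -
  obtain i where "r$i \<noteq> 0" using assms(2) by (metis vec_eq_iff zero_index)
  hence "r$i powr a > 0" using assms(1) by simp
  also have "r$i powr a \<le> (\<Sum>i\<in>UNIV. r$i powr a)"
    by (rule member_le_sum) auto
  finally show ?thesis .
qed

lemma pnorm_eq:
  fixes r :: "real^'n"
  assumes "\<forall>i. 0 \<le> r$i"
  shows "pnorm pp r = (\<Sum>i\<in>UNIV. r$i powr pp) powr ss"
  using assms by (simp add: pnorm_def inv_pp)

lemma pnorm_pos:
  fixes r :: "real^'n"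
  assumes "\<forall>i. 0 \<le> r$i" "r \<noteq> 0"
  shows "pnorm pp r > 0"
  using sum_pos_vec[OF assms, of pp] pnorm_eq[OF assms(1)] by simp

lemma Tmap_eq: "Tmap D (r,c) = ((\<chi> i. r$i powr pp / (\<Sum>i'\<in>UNIV. r$i' powr pp)),
          (\<chi> j. c$j powr pp / (\<Sum>j'\<in>UNIV. c$j' powr pp)))"
  by (simp add: Tmap_def Let_def)

lemma normalize_in_simplex:
  fixes r :: "real^'n"
  assumes "\<forall>i. 0 \<le> r$i" "r \<noteq> 0"
  shows "(\<forall>i. 0 \<le> (\<chi> i. r$i powr pp / (\<Sum>i'\<in>UNIV. r$i' powr pp))$i)
       \<and> (\<Sum>i\<in>UNIV. (\<chi> i. r$i powr pp / (\<Sum>i'\<in>UNIV. r$i' powr pp))$i) = 1"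
  using sum_pos_vec[OF assms, of pp] by (simp add: sum_divide_distrib[symmetric])

lemma Tmap_image: "Tmap D ` (PhiDom :: ((real^'q) \<times> (real^'q)) set) = SimDom"
proof
  show "Tmap D ` PhiDom \<subseteq> (SimDom :: ((real^'q) \<times> (real^'q)) set)"
  proof
    fix x assume "x \<in> Tmap D ` (PhiDom :: ((real^'q) \<times> (real^'q)) set)"
    then obtain r c where rc: "(r,c) \<in> PhiDom" and x: "x = Tmap D (r,c)" by auto
    show "x \<in> SimDom"
      using normalize_in_simplex[of r] normalize_in_simplex[of c] rc
      unfolding x Tmap_eq SimDom_def PhiDom_def by auto
  qed
next
  show "(SimDom :: ((real^'q) \<times> (real^'q)) set) \<subseteq> Tmap D ` PhiDom"
  proof
    fix x :: "(real^'q) \<times> (real^'q)" assume "x \<in> SimDom"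
    then obtain a b where x: "x = (a,b)" and a0: "\<forall>i. 0 \<le> a$i" and a1: "(\<Sum>i\<in>UNIV. a$i) = 1"
      and b0: "\<forall>j. 0 \<le> b$j" and b1: "(\<Sum>j\<in>UNIV. b$j) = 1"
      unfolding SimDom_def by auto
    define r :: "real^'q" where "r = (\<chi> i. a$i powr ss)"
    define c :: "real^'q" where "c = (\<chi> i. b$i powr ss)"
    have rp: "r$i powr pp = a$i" for i using a0 by (simp add: r_def powr_ss_pp)
    have cp: "c$i powr pp = b$i" for i using b0 by (simp add: c_def powr_ss_pp)
    have "r \<noteq> 0"
    proof
      assume "r = 0" hence "a$i = 0" for i using rp[of i] by simp
      hence "(\<Sum>i\<in>UNIV. a$i) = 0" by simp
      thus False using a1 by simp
    qed
    moreover have "c \<noteq> 0"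
    proof
      assume "c = 0" hence "b$i = 0" for i using cp[of i] by simp
      hence "(\<Sum>i\<in>UNIV. b$i) = 0" by simp
      thus False using b1 by simp
    qed
    ultimately have "(r,c) \<in> PhiDom" unfolding PhiDom_def r_def c_def by auto
    moreover have "Tmap D (r,c) = x"
      unfolding Tmap_eq x rp cp a1 b1 by (simp add: vec_eq_iff)
    ultimately show "x \<in> Tmap D ` PhiDom" by force
  qed
qed

lemma normalize_inj:
  fixes r r' :: "real^'n"
  assumes "\<forall>i. 0 \<le> r$i" "r \<noteq> 0" "\<forall>i. 0 \<le> r'$i" "r' \<noteq> 0"
    and eq: "(\<chi> i. r$i powr pp / (\<Sum>i'\<in>UNIV. r$i' powr pp)) = (\<chi> i. r'$i powr pp / (\<Sum>i'\<in>UNIV. r'$i' powr pp))"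
  shows "\<exists>a>0. r' = a *\<^sub>R r"
proof -
  define S where "S = (\<Sum>i'\<in>UNIV. r$i' powr pp)"
  define S' where "S' = (\<Sum>i'\<in>UNIV. r'$i' powr pp)"
  have S: "S > 0" "S' > 0" using sum_pos_vec assms unfolding S_def S'_def by auto
  have e: "r'$i powr pp = (S'/S) * r$i powr pp" for i
    using eq[unfolded vec_eq_iff, rule_format, of i] S by (simp add: S_def[symmetric] S'_def[symmetric] field_simps)
  have "r'$i = (S'/S) powr ss * r$i" for i
  proof -
    have "r'$i = (r'$i powr pp) powr ss" using assms(3) by (simp add: powr_pp_ss)
    also have "\<dots> = ((S'/S) * r$i powr pp) powr ss" by (simp only: e)
    also have "\<dots> = (S'/S) powr ss * (r$i powr pp) powr ss" by (rule powr_mult)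
    also have "\<dots> = (S'/S) powr ss * r$i" using assms(1) by (simp add: powr_pp_ss)
    finally show ?thesis .
  qed
  hence "r' = ((S'/S) powr ss) *\<^sub>R r" by (simp add: vec_eq_iff)
  moreover have "(S'/S) powr ss > 0" using S by simp
  ultimately show ?thesis by blast
qed

lemma Tmap_inj:
  assumes "(r,c) \<in> PhiDom" "(r',c') \<in> PhiDom" "Tmap D (r, c) = Tmap D (r', c')"
  shows "\<exists>a>0. \<exists>b>0. r' = a *\<^sub>R r \<and> c' = b *\<^sub>R c"
  using normalize_inj[of r r'] normalize_inj[of c c'] assms
  unfolding PhiDom_def Tmap_eq by auto

lemma Tmap_root:
  fixes r :: "real^'n"
  assumes "\<forall>i. 0 \<le> r$i" "r \<noteq> 0"
  shows "(\<chi> i. ((\<chi> i. r$i powr pp / (\<Sum>i'\<in>UNIV. r$i' powr pp))$i) powr ss) = (1 / pnorm pp r) *\<^sub>R r"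
  using assms(1) by (simp add: vec_eq_iff pnorm_eq powr_divide powr_pp_ss)

end

lemma powr_term_deriv:
  fixes y0 y1 q :: real
  assumes "0 \<le> y0" "0 \<le> y1" "1 < q"
  shows "((\<lambda>t. (y0 + t*(y1-y0)) powr q) has_real_derivative q * y0 powr (q-1) * (y1-y0)) (at_right 0)"
proof (cases "y0 = 0")
  case False
  hence "y0 > 0" using assms by simp
  have "((\<lambda>t. (y0 + t*(y1-y0)) powr q) has_real_derivative q * (y0 + 0*(y1-y0)) powr (q-1) * (0*0 + 1*(y1-y0))) (at 0)"
    using \<open>y0>0\<close> by (auto intro!: derivative_eq_intros)
  thus ?thesis by (simp add: has_field_derivative_at_within)
next
  case True
  have lim: "((\<lambda>t::real. y1 powr q * t powr (q-1)) \<longlongrightarrow> y1 powr q * 0) (at_right 0)"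
  proof -
    have l1: "((\<lambda>t::real. t) \<longlongrightarrow> 0) (at_right 0)" by (rule tendsto_ident_at)
    have "\<forall>\<^sub>F t::real in at_right 0. 0 \<le> t"
      by (rule eventually_mono[OF eventually_at_right_less]) simp
    hence "((\<lambda>t::real. t powr (q-1)) \<longlongrightarrow> 0) (at_right 0)"
      using tendsto_zero_powrI[OF l1 tendsto_const, of "q-1"] assms by simp
    thus ?thesis by (intro tendsto_mult tendsto_const)
  qed
  have ev: "\<forall>\<^sub>F t in at_right 0. y1 powr q * t powr (q-1) = ((0 + t*(y1-0)) powr q - (0 + 0*(y1-0)) powr q) / (t - 0)"
  proof (rule eventually_at_rightI[of 0 1])
    fix t :: real assume "t \<in> {0<..<1}"
    thus "y1 powr q * t powr (q-1) = ((0 + t*(y1-0)) powr q - (0 + 0*(y1-0)) powr q) / (t - 0)"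
      by (simp add: powr_mult powr_diff mult.commute)
  qed simp
  have "((\<lambda>t. ((0 + t*(y1-0)) powr q - (0 + 0*(y1-0)) powr q) / (t - 0)) \<longlongrightarrow> 0) (at_right 0)"
    using tendsto_cong[OF ev] lim by simp
  thus ?thesis using True unfolding has_field_derivative_iff by simp
qed

context spin begin

definition NN :: "real^'q \<Rightarrow> real^'q \<Rightarrow> real" where
  "NN r c = (\<Sum>i\<in>UNIV. \<Sum>j\<in>UNIV. r$i * B$i$j * c$j)"
definition SS :: "real^'q \<Rightarrow> real" where
  "SS r = (\<Sum>i\<in>UNIV. r$i powr pp)"
definition Bc :: "real^'q \<Rightarrow> 'q \<Rightarrow> real" where
  "Bc c i = (\<Sum>j\<in>UNIV. B$i$j * c$j)"
definition Br :: "real^'q \<Rightarrow> 'q \<Rightarrow> real" where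
  "Br r j = (\<Sum>i\<in>UNIV. B$i$j * r$i)"
definition fpc :: "real^'q \<Rightarrow> real^'q \<Rightarrow> bool" where
  "fpc r c \<longleftrightarrow> (\<exists>\<kappa>>0. \<forall>i. Bc c i = \<kappa> * r$i powr (pp-1)) \<and> (\<exists>\<mu>>0. \<forall>j. Br r j = \<mu> * c$j powr (pp-1))"

lemma NN_Bc: "NN r c = (\<Sum>i\<in>UNIV. r$i * Bc c i)"
  by (simp add: NN_def Bc_def sum_distrib_left mult.assoc)
lemma NN_Br: "NN r c = (\<Sum>j\<in>UNIV. c$j * Br r j)"
proof -
  have "NN r c = (\<Sum>j\<in>UNIV. \<Sum>i\<in>UNIV. r$i * B$i$j * c$j)"
    unfolding NN_def by (rule sum.swap)
  also have "\<dots> = (\<Sum>j\<in>UNIV. c$j * Br r j)"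
    unfolding Br_def sum_distrib_left by (intro sum.cong refl) (simp add: ac_simps)
  finally show ?thesis .
qed

lemma SS_pos: "\<forall>i. 0 \<le> r$i \<Longrightarrow> r \<noteq> 0 \<Longrightarrow> SS r > 0"
  unfolding SS_def by (rule sum_pos_vec)

lemma Phi_eq:
  assumes "(r,c) \<in> PhiDom"
  shows "Phi B D (r,c) = (if NN r c > 0 then ereal (real D * (ln (NN r c) - ss * ln (SS r) - ss * ln (SS c))) else -\<infinity>)"
proof -
  have r: "\<forall>i. 0 \<le> r$i" "r \<noteq> 0" and c: "\<forall>i. 0 \<le> c$i" "c \<noteq> 0" using assms by (auto simp: PhiDom_def)
  have in1: "r \<bullet> (B *v c) = NN r c"
    by (simp add: inner_vec_def matrix_vector_mult_def NN_def sum_distrib_left mult.assoc)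
  have nr: "pnorm pp r = SS r powr ss" using pnorm_eq[OF r(1)] by (simp add: SS_def)
  have nc: "pnorm pp c = SS c powr ss" using pnorm_eq[OF c(1)] by (simp add: SS_def)
  have Sr: "SS r > 0" and Sc: "SS c > 0" using SS_pos r c by auto
  define z where "z = NN r c / (SS r powr ss * SS c powr ss)"
  have "SS r powr ss * SS c powr ss > 0" using Sr Sc by simp
  hence zpos: "z > 0 \<longleftrightarrow> NN r c > 0" by (simp add: z_def zero_less_divide_iff)
  have lnz: "NN r c > 0 \<Longrightarrow> ln z = ln (NN r c) - ss * ln (SS r) - ss * ln (SS c)"
    using Sr Sc by (simp add: z_def ln_div ln_mult)
  show ?thesis unfolding Phi_def Let_def fst_conv snd_conv in1 nr nc z_def[symmetric]
    using zpos lnz by auto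
qed

lemma PhiDom_path:
  fixes r c r' c' :: "real^'q"
  assumes "(r,c) \<in> PhiDom" "(r',c') \<in> PhiDom" "0 \<le> t" "t \<le> 1"
  shows "(r + t *\<^sub>R (r' - r), c + t *\<^sub>R (c' - c)) \<in> PhiDom"
proof -
  have cv: "\<forall>i. 0 \<le> (v + t *\<^sub>R (v' - v))$i" "v + t *\<^sub>R (v' - v) \<noteq> 0"
    if H: "\<forall>i. 0 \<le> v$i" "v \<noteq> 0" "\<forall>i. 0 \<le> v'$i" "v' \<noteq> 0" for v v' :: "real^'q"
  proof -
    have e: "(v + t *\<^sub>R (v' - v))$i = (1-t) * v$i + t * v'$i" for i by (simp add: algebra_simps)
    show "\<forall>i. 0 \<le> (v + t *\<^sub>R (v' - v))$i" unfolding e using H assms by (simp add: add_nonneg_nonneg)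
    show "v + t *\<^sub>R (v' - v) \<noteq> 0"
    proof (cases "t = 1")
      case True thus ?thesis using H by simp
    next
      case False
      obtain i where "v$i \<noteq> 0" using H(2) by (metis vec_eq_iff zero_index)
      hence "(1-t) * v$i > 0" using H(1) False assms by (simp add: order_le_neq_trans)
      moreover have "t * v'$i \<ge> 0" using H(3) assms by simp
      ultimately have "(v + t *\<^sub>R (v' - v))$i > 0" unfolding e by (rule add_pos_nonneg)
      thus ?thesis by (metis less_irrefl zero_index)
    qed
  qed
  show ?thesis using cv[of r r'] cv[of c c'] assms by (auto simp: PhiDom_def)
qed

end

lemma ev_transfer:
  assumes "\<forall>\<^sub>F t in at_right 0. F t = ereal (f t)" "F0 = ereal (f 0)"
  shows "(\<forall>\<epsilon>>0. \<forall>\<^sub>F t in at_right 0. F t \<le> F0 + ereal (\<epsilon>*t)) \<longleftrightarrow>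
         (\<forall>\<epsilon>>0. \<forall>\<^sub>F t in at_right 0. f t \<le> f 0 + \<epsilon>*t)"
proof (intro iffI allI impI)
  fix \<epsilon> :: real assume H: "\<forall>\<epsilon>>0. \<forall>\<^sub>F t in at_right 0. F t \<le> F0 + ereal (\<epsilon>*t)" and "\<epsilon> > 0"
  from H[rule_format, OF \<open>\<epsilon>>0\<close>] assms(1) show "\<forall>\<^sub>F t in at_right 0. f t \<le> f 0 + \<epsilon>*t"
    by eventually_elim (simp add: assms(2))
next
  fix \<epsilon> :: real assume H: "\<forall>\<epsilon>>0. \<forall>\<^sub>F t in at_right 0. f t \<le> f 0 + \<epsilon>*t" and "\<epsilon> > 0"
  from H[rule_format, OF \<open>\<epsilon>>0\<close>] assms(1) show "\<forall>\<^sub>F t in at_right 0. F t \<le> F0 + ereal (\<epsilon>*t)"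
    by eventually_elim (simp add: assms(2))
qed

lemma deriv_pos_ev:
  assumes "(g has_real_derivative Dg) (at_right 0)" "g 0 > 0"
  shows "\<forall>\<^sub>F t in at_right 0. g t > 0"
proof -
  have "continuous (at_right 0) g" using DERIV_continuous[OF assms(1)] .
  hence "(g \<longlongrightarrow> g 0) (at_right 0)" by (simp add: continuous_within)
  thus ?thesis using assms(2) by (rule order_tendstoD)
qed

lemma bilin_deriv: "((\<lambda>t::real. (a + t*b) * e * (c + t*d)) has_real_derivative (b*e*c + a*e*d)) (at 0)"
  by (auto intro!: derivative_eq_intros simp: algebra_simps)

context spin begin

definition aa :: "real^'q \<Rightarrow> real^'q \<Rightarrow> 'q \<Rightarrow> real" where
  "aa r c i = Bc c i / NN r c - r$i powr (pp-1) / SS r"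
definition bb :: "real^'q \<Rightarrow> real^'q \<Rightarrow> 'q \<Rightarrow> real" where
  "bb r c j = Br r j / NN r c - c$j powr (pp-1) / SS c"

lemma NN_path_deriv:
  "((\<lambda>t. NN (r + t *\<^sub>R (r' - r)) (c + t *\<^sub>R (c' - c))) has_real_derivative
     (\<Sum>i\<in>UNIV. (r'$i - r$i) * Bc c i) + (\<Sum>j\<in>UNIV. (c'$j - c$j) * Br r j)) (at_right 0)"
proof -
  have e: "NN (r + t *\<^sub>R (r' - r)) (c + t *\<^sub>R (c' - c)) =
      (\<Sum>i\<in>UNIV. \<Sum>j\<in>UNIV. (r$i + t*(r'$i - r$i)) * B$i$j * (c$j + t*(c'$j - c$j)))" for t
    by (simp add: NN_def)
  have "((\<lambda>t. (\<Sum>i\<in>UNIV. \<Sum>j\<in>UNIV. (r$i + t*(r'$i - r$i)) * B$i$j * (c$j + t*(c'$j - c$j))))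
     has_real_derivative (\<Sum>i\<in>UNIV. \<Sum>j\<in>UNIV. ((r'$i - r$i) * B$i$j * c$j
         + r$i * B$i$j * (c'$j - c$j)))) (at 0)"
    by (intro DERIV_sum bilin_deriv)
  moreover have "(\<Sum>i\<in>UNIV. \<Sum>j\<in>UNIV. ((r'$i - r$i) * B$i$j * c$j
         + r$i * B$i$j * (c'$j - c$j))) =
      (\<Sum>i\<in>UNIV. (r'$i - r$i) * Bc c i) + (\<Sum>j\<in>UNIV. (c'$j - c$j) * Br r j)"
  proof -
    have 1: "(\<Sum>i\<in>UNIV. \<Sum>j\<in>UNIV. (r'$i - r$i) * B$i$j * c$j) = (\<Sum>i\<in>UNIV. (r'$i - r$i) * Bc c i)"
      by (simp add: Bc_def sum_distrib_left mult.assoc)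
    have 2: "(\<Sum>i\<in>UNIV. \<Sum>j\<in>UNIV. r$i * B$i$j * (c'$j - c$j)) = (\<Sum>j\<in>UNIV. (c'$j - c$j) * Br r j)"
      by (subst sum.swap) (simp add: Br_def sum_distrib_left ac_simps)
    show ?thesis using 1 2 by (simp add: sum.distrib)
  qed
  ultimately show ?thesis unfolding e by (simp add: has_field_derivative_at_within)
qed

lemma SS_path_deriv:
  assumes "\<forall>i. 0 \<le> r$i" "\<forall>i. 0 \<le> r'$i"
  shows "((\<lambda>t. SS (r + t *\<^sub>R (r' - r))) has_real_derivative
     (\<Sum>i\<in>UNIV. pp * r$i powr (pp-1) * (r'$i - r$i))) (at_right 0)"
  unfolding SS_def using assms pp_gt1
  by (simp add: algebra_simps) (intro DERIV_sum powr_term_deriv[of "r$i" "r'$i" pp for i, simplified algebra_simps]; simp)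

definition Lin :: "real^'q \<Rightarrow> real^'q \<Rightarrow> real^'q \<Rightarrow> real^'q \<Rightarrow> real" where
  "Lin r c r' c' = (\<Sum>i\<in>UNIV. aa r c i * r'$i) + (\<Sum>j\<in>UNIV. bb r c j * c'$j)"

lemma pp_ss_x: "pp * (ss * x) = x"
  by (simp add: mult.assoc[symmetric] ss_pp[unfolded mult.commute[of ss]])

lemma sum_aa_r:
  assumes "(r,c) \<in> PhiDom" "NN r c > 0"
  shows "(\<Sum>i\<in>UNIV. aa r c i * r$i) = 0"
proof -
  have r: "\<forall>i. 0 \<le> r$i" "r \<noteq> 0" using assms by (auto simp: PhiDom_def)
  have S: "SS r > 0" using SS_pos r by auto
  have "(\<Sum>i\<in>UNIV. aa r c i * r$i) = (\<Sum>i\<in>UNIV. r$i * Bc c i / NN r c - r$i * r$i powr (pp-1) / SS r)"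
    by (intro sum.cong refl) (simp add: aa_def algebra_simps)
  also have "\<dots> = (\<Sum>i\<in>UNIV. r$i * Bc c i) / NN r c - (\<Sum>i\<in>UNIV. r$i * r$i powr (pp-1)) / SS r"
    by (simp add: sum_subtractf sum_divide_distrib)
  also have "(\<Sum>i\<in>UNIV. r$i * r$i powr (pp-1)) = SS r"
    unfolding SS_def using r(1) by (intro sum.cong refl) (simp add: powr_mult_base)
  finally show ?thesis using assms(2) S by (simp add: NN_Bc[symmetric])
qed

lemma sum_bb_c:
  assumes "(r,c) \<in> PhiDom" "NN r c > 0"
  shows "(\<Sum>j\<in>UNIV. bb r c j * c$j) = 0"
proof -
  have c: "\<forall>i. 0 \<le> c$i" "c \<noteq> 0" using assms by (auto simp: PhiDom_def)
  have S: "SS c > 0" using SS_pos c by auto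
  have "(\<Sum>j\<in>UNIV. bb r c j * c$j) = (\<Sum>j\<in>UNIV. c$j * Br r j / NN r c - c$j * c$j powr (pp-1) / SS c)"
    by (intro sum.cong refl) (simp add: bb_def algebra_simps)
  also have "\<dots> = (\<Sum>j\<in>UNIV. c$j * Br r j) / NN r c - (\<Sum>j\<in>UNIV. c$j * c$j powr (pp-1)) / SS c"
    by (simp add: sum_subtractf sum_divide_distrib)
  also have "(\<Sum>j\<in>UNIV. c$j * c$j powr (pp-1)) = SS c"
    unfolding SS_def using c(1) by (intro sum.cong refl) (simp add: powr_mult_base)
  finally show ?thesis using assms(2) S by (simp add: NN_Br[symmetric])
qed

lemma Df_eq:
  assumes "(r,c) \<in> PhiDom" "NN r c > 0"
  shows "real D * (((\<Sum>i\<in>UNIV. (r'$i - r$i) * Bc c i) + (\<Sum>j\<in>UNIV. (c'$j - c$j) * Br r j)) / NN r c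
       - ss * ((\<Sum>i\<in>UNIV. pp * r$i powr (pp-1) * (r'$i - r$i)) / SS r)
       - ss * ((\<Sum>j\<in>UNIV. pp * c$j powr (pp-1) * (c'$j - c$j)) / SS c)) = real D * Lin r c r' c'"
proof -
  have e1: "(\<Sum>i\<in>UNIV. aa r c i * (r'$i - r$i)) = (\<Sum>i\<in>UNIV. (r'$i - r$i) * Bc c i) / NN r c
       - ss * ((\<Sum>i\<in>UNIV. pp * r$i powr (pp-1) * (r'$i - r$i)) / SS r)"
  proof -
    have "(\<Sum>i\<in>UNIV. aa r c i * (r'$i - r$i)) = (\<Sum>i\<in>UNIV. (r'$i - r$i) * Bc c i / NN r c
       - ss * (pp * r$i powr (pp-1) * (r'$i - r$i) / SS r))"
      by (intro sum.cong refl) (simp add: aa_def algebra_simps pp_ss_x)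
    thus ?thesis by (simp add: sum_subtractf sum_divide_distrib sum_distrib_left)
  qed
  have e2: "(\<Sum>j\<in>UNIV. bb r c j * (c'$j - c$j)) = (\<Sum>j\<in>UNIV. (c'$j - c$j) * Br r j) / NN r c
       - ss * ((\<Sum>j\<in>UNIV. pp * c$j powr (pp-1) * (c'$j - c$j)) / SS c)"
  proof -
    have "(\<Sum>j\<in>UNIV. bb r c j * (c'$j - c$j)) = (\<Sum>j\<in>UNIV. (c'$j - c$j) * Br r j / NN r c
       - ss * (pp * c$j powr (pp-1) * (c'$j - c$j) / SS c))"
      by (intro sum.cong refl) (simp add: bb_def algebra_simps pp_ss_x)
    thus ?thesis by (simp add: sum_subtractf sum_divide_distrib sum_distrib_left)
  qed
  have "Lin r c r' c' = (\<Sum>i\<in>UNIV. aa r c i * (r'$i - r$i)) + (\<Sum>j\<in>UNIV. bb r c j * (c'$j - c$j))"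
    using sum_aa_r[OF assms] sum_bb_c[OF assms]
    by (simp add: Lin_def right_diff_distrib sum_subtractf)
  hence L: "Lin r c r' c' = ((\<Sum>i\<in>UNIV. (r'$i - r$i) * Bc c i) / NN r c
       - ss * ((\<Sum>i\<in>UNIV. pp * r$i powr (pp-1) * (r'$i - r$i)) / SS r))
      + ((\<Sum>j\<in>UNIV. (c'$j - c$j) * Br r j) / NN r c
       - ss * ((\<Sum>j\<in>UNIV. pp * c$j powr (pp-1) * (c'$j - c$j)) / SS c))" unfolding e1 e2 .
  have gen: "\<And>X Y N P Q L. L = (X/N - ss*P) + (Y/N - ss*Q) \<Longrightarrow> real D*((X+Y)/N - ss*P - ss*Q) = real D*L"
  proof -
    fix X Y N P Q L :: real assume "L = (X/N - ss*P) + (Y/N - ss*Q)"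
    thus "real D*((X+Y)/N - ss*P - ss*Q) = real D*L" by (simp add: add_divide_distrib)
  qed
  show ?thesis by (rule gen[OF L])
qed

end

lemma sum_axis: "(\<Sum>k\<in>UNIV. f k * (axis i (1::real) :: real^'n) $ k) = f i"
  by (simp add: axis_def if_distrib[of "\<lambda>x. f _ * x"] cong: if_cong)

context spin begin

lemma crit_dir_Phi:
  fixes r c r' c' :: "real^'q"
  assumes rc: "(r,c) \<in> PhiDom" and N0: "NN r c > 0" and rc': "(r',c') \<in> PhiDom"
  shows "(\<forall>\<epsilon>>0. \<forall>\<^sub>F t in at_right 0. Phi B D ((r,c) + t *\<^sub>R ((r',c') - (r,c))) \<le> Phi B D (r,c) + ereal(\<epsilon>*t))
         \<longleftrightarrow> Lin r c r' c' \<le> 0"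
proof -
  have r: "\<forall>i. 0 \<le> r$i" "r \<noteq> 0" and c: "\<forall>i. 0 \<le> c$i" "c \<noteq> 0" using rc by (auto simp: PhiDom_def)
  have r': "\<forall>i. 0 \<le> r'$i" and c': "\<forall>i. 0 \<le> c'$i" using rc' by (auto simp: PhiDom_def)
  have Sr: "SS r > 0" and Sc: "SS c > 0" using SS_pos r c by auto
  define N where "N t = NN (r + t *\<^sub>R (r' - r)) (c + t *\<^sub>R (c' - c))" for t
  define Sr where "Sr t = SS (r + t *\<^sub>R (r' - r))" for t
  define Sc where "Sc t = SS (c + t *\<^sub>R (c' - c))" for t
  define f where "f t = real D * (ln (N t) - ss * ln (Sr t) - ss * ln (Sc t))" for t
  define N' where "N' = (\<Sum>i\<in>UNIV. (r'$i - r$i) * Bc c i) + (\<Sum>j\<in>UNIV. (c'$j - c$j) * Br r j)"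
  define Sr' where "Sr' = (\<Sum>i\<in>UNIV. pp * r$i powr (pp-1) * (r'$i - r$i))"
  define Sc' where "Sc' = (\<Sum>j\<in>UNIV. pp * c$j powr (pp-1) * (c'$j - c$j))"
  have dN: "(N has_real_derivative N') (at_right 0)" unfolding N_def N'_def by (rule NN_path_deriv)
  have dSr: "(Sr has_real_derivative Sr') (at_right 0)" unfolding Sr_def Sr'_def by (rule SS_path_deriv[OF r(1) r'])
  have dSc: "(Sc has_real_derivative Sc') (at_right 0)" unfolding Sc_def Sc'_def by (rule SS_path_deriv[OF c(1) c'])
  have N00: "N 0 = NN r c" "Sr 0 = SS r" "Sc 0 = SS c" by (simp_all add: N_def Sr_def Sc_def)
  have df: "(f has_real_derivative real D * (N' / N 0 - ss * (Sr' / Sr 0) - ss * (Sc' / Sc 0))) (at_right 0)"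
    unfolding f_def using N00 N0 Sr Sc
    by (auto intro!: derivative_eq_intros dN dSr dSc simp: field_simps)
  have Deq: "real D * (N' / N 0 - ss * (Sr' / Sr 0) - ss * (Sc' / Sc 0)) = real D * Lin r c r' c'"
    unfolding N00 N'_def Sr'_def Sc'_def by (rule Df_eq[OF rc N0])
  have evp: "\<forall>\<^sub>F t in at_right 0. N t > 0" using deriv_pos_ev[OF dN] N00 N0 by simp
  have ev01: "\<forall>\<^sub>F t::real in at_right 0. 0 < t \<and> t < 1"
    by (rule eventually_at_rightI[of 0 1]) auto
  have evE: "\<forall>\<^sub>F t in at_right 0. Phi B D ((r,c) + t *\<^sub>R ((r',c') - (r,c))) = ereal (f t)"
    using evp ev01
  proof eventually_elim
    case (elim t)
    have "(r + t *\<^sub>R (r' - r), c + t *\<^sub>R (c' - c)) \<in> PhiDom"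
      using PhiDom_path[OF rc rc', of t] elim by auto
    from Phi_eq[OF this] elim show ?case
      by (simp add: f_def N_def Sr_def Sc_def)
  qed
  have E0: "Phi B D (r,c) = ereal (f 0)"
    using Phi_eq[OF rc] N0 by (simp add: f_def N_def Sr_def Sc_def)
  have "(\<forall>\<epsilon>>0. \<forall>\<^sub>F t in at_right 0. Phi B D ((r,c) + t *\<^sub>R ((r',c') - (r,c))) \<le> Phi B D (r,c) + ereal(\<epsilon>*t))
     \<longleftrightarrow> (\<forall>\<epsilon>>0. \<forall>\<^sub>F t in at_right 0. f t \<le> f 0 + \<epsilon>*t)"
    by (rule ev_transfer[OF evE E0])
  also have "\<dots> \<longleftrightarrow> real D * Lin r c r' c' \<le> 0"
    using crit_deriv_iff[OF df] by (simp only: Deq)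
  also have "\<dots> \<longleftrightarrow> Lin r c r' c' \<le> 0" using Dpos by (simp add: mult_le_0_iff)
  finally show ?thesis .
qed

lemma lin_iff:
  fixes r c :: "real^'q"
  assumes rc: "(r,c) \<in> PhiDom" and N0: "NN r c > 0"
  shows "(\<forall>r' c'. (r',c') \<in> PhiDom \<longrightarrow> Lin r c r' c' \<le> 0) \<longleftrightarrow> (\<forall>i. aa r c i \<le> 0) \<and> (\<forall>j. bb r c j \<le> 0)"
proof
  assume H: "\<forall>r' c'. (r',c') \<in> PhiDom \<longrightarrow> Lin r c r' c' \<le> 0"
  have r: "\<forall>i. 0 \<le> r$i" "r \<noteq> 0" and c: "\<forall>i. 0 \<le> c$i" "c \<noteq> 0" using rc by (auto simp: PhiDom_def)
  show "(\<forall>i. aa r c i \<le> 0) \<and> (\<forall>j. bb r c j \<le> 0)"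
  proof safe
    fix i
    have "(r + axis i 1)$i > 0" using r by (simp add: axis_def add_nonneg_pos)
    hence "r + axis i 1 \<noteq> 0" by (metis less_irrefl zero_index)
    moreover have "\<forall>k. 0 \<le> (r + axis i 1)$k" using r by (simp add: axis_def)
    ultimately have "(r + axis i 1, c) \<in> PhiDom" using r c by (simp add: PhiDom_def)
    hence "Lin r c (r + axis i 1) c \<le> 0" using H by blast
    moreover have "Lin r c (r + axis i 1) c = aa r c i"
      using sum_aa_r[OF rc N0] sum_bb_c[OF rc N0]
      by (simp add: Lin_def distrib_left sum.distrib sum_axis)
    ultimately show "aa r c i \<le> 0" by simp
  next
    fix j
    have "(c + axis j 1)$j > 0" using c by (simp add: axis_def add_nonneg_pos)
    hence "c + axis j 1 \<noteq> 0" by (metis less_irrefl zero_index)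
    moreover have "\<forall>k. 0 \<le> (c + axis j 1)$k" using c by (simp add: axis_def)
    ultimately have "(r, c + axis j 1) \<in> PhiDom" using r c by (simp add: PhiDom_def)
    hence "Lin r c r (c + axis j 1) \<le> 0" using H by blast
    moreover have "Lin r c r (c + axis j 1) = bb r c j"
      using sum_aa_r[OF rc N0] sum_bb_c[OF rc N0]
      by (simp add: Lin_def distrib_left sum.distrib sum_axis)
    ultimately show "bb r c j \<le> 0" by simp
  qed
next
  assume H: "(\<forall>i. aa r c i \<le> 0) \<and> (\<forall>j. bb r c j \<le> 0)"
  show "\<forall>r' c'. (r',c') \<in> PhiDom \<longrightarrow> Lin r c r' c' \<le> 0"
  proof (intro allI impI)
    fix r' c' :: "real^'q" assume "(r',c') \<in> PhiDom"
    hence r': "\<forall>i. 0 \<le> r'$i" and c': "\<forall>i. 0 \<le> c'$i" by (auto simp: PhiDom_def)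
    have "(\<Sum>i\<in>UNIV. aa r c i * r'$i) \<le> 0" using H r' by (intro sum_nonpos mult_nonpos_nonneg) auto
    moreover have "(\<Sum>j\<in>UNIV. bb r c j * c'$j) \<le> 0" using H c' by (intro sum_nonpos mult_nonpos_nonneg) auto
    ultimately show "Lin r c r' c' \<le> 0" by (simp add: Lin_def)
  qed
qed

end

context spin begin

lemma crit_Phi_iff:
  fixes r c :: "real^'q"
  assumes rc: "(r,c) \<in> PhiDom"
  shows "crit_point (Phi B D) PhiDom (r,c) \<longleftrightarrow> NN r c > 0 \<and> (\<forall>i. aa r c i \<le> 0) \<and> (\<forall>j. bb r c j \<le> 0)"
proof -
  have fin: "Phi B D (r,c) \<noteq> \<infinity>" using Phi_eq[OF rc] by simp
  have ninf: "Phi B D (r,c) \<noteq> -\<infinity> \<longleftrightarrow> NN r c > 0" using Phi_eq[OF rc] by simp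
  show ?thesis
  proof (cases "NN r c > 0")
    case False thus ?thesis using ninf by (simp add: crit_point_def)
  next
    case True
    have "crit_point (Phi B D) PhiDom (r,c) \<longleftrightarrow> (\<forall>r' c'. (r',c') \<in> PhiDom \<longrightarrow> Lin r c r' c' \<le> 0)"
      unfolding crit_point_def using rc fin True ninf crit_dir_Phi[OF rc True]
      by (auto simp del: scaleR_Pair)
    also have "\<dots> \<longleftrightarrow> (\<forall>i. aa r c i \<le> 0) \<and> (\<forall>j. bb r c j \<le> 0)" by (rule lin_iff[OF rc True])
    finally show ?thesis using True by simp
  qed
qed

lemma Bc_nonneg: "\<forall>j. 0 \<le> c$j \<Longrightarrow> 0 \<le> Bc c i"
  unfolding Bc_def using Bnn by (intro sum_nonneg) auto
lemma Br_nonneg: "\<forall>j. 0 \<le> r$j \<Longrightarrow> 0 \<le> Br r i"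
  unfolding Br_def using Bnn by (intro sum_nonneg) auto

lemma fpc_iff:
  fixes r c :: "real^'q"
  assumes rc: "(r,c) \<in> PhiDom"
  shows "(NN r c > 0 \<and> (\<forall>i. aa r c i \<le> 0) \<and> (\<forall>j. bb r c j \<le> 0)) \<longleftrightarrow> fpc r c"
proof -
  have r: "\<forall>i. 0 \<le> r$i" "r \<noteq> 0" and c: "\<forall>i. 0 \<le> c$i" "c \<noteq> 0" using rc by (auto simp: PhiDom_def)
  have Sr: "SS r > 0" and Sc: "SS c > 0" using SS_pos r c by auto
  show ?thesis
  proof
    assume H: "NN r c > 0 \<and> (\<forall>i. aa r c i \<le> 0) \<and> (\<forall>j. bb r c j \<le> 0)"
    hence N0: "NN r c > 0" by simp
    have za: "aa r c i * r$i = 0" for i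
    proof -
      have "(\<Sum>i\<in>UNIV. - (aa r c i * r$i)) = 0" using sum_aa_r[OF rc N0] by (simp add: sum_negf)
      moreover have "\<forall>i. 0 \<le> - (aa r c i * r$i)" using H r by (simp add: mult_nonpos_nonneg)
      ultimately show ?thesis using sum_nonneg_eq_0_iff[of UNIV "\<lambda>i. - (aa r c i * r$i)"] by simp
    qed
    have zb: "bb r c j * c$j = 0" for j
    proof -
      have "(\<Sum>j\<in>UNIV. - (bb r c j * c$j)) = 0" using sum_bb_c[OF rc N0] by (simp add: sum_negf)
      moreover have "\<forall>j. 0 \<le> - (bb r c j * c$j)" using H c by (simp add: mult_nonpos_nonneg)
      ultimately show ?thesis using sum_nonneg_eq_0_iff[of UNIV "\<lambda>j. - (bb r c j * c$j)"] by simp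
    qed
    have "\<forall>i. Bc c i = (NN r c / SS r) * r$i powr (pp-1)"
    proof
      fix i show "Bc c i = (NN r c / SS r) * r$i powr (pp-1)"
      proof (cases "r$i = 0")
        case True
        have "aa r c i \<le> 0" using H by simp
        hence "Bc c i \<le> 0" using True N0 by (simp add: aa_def divide_le_0_iff)
        thus ?thesis using Bc_nonneg[OF c(1), of i] True by simp
      next
        case False
        hence "aa r c i = 0" using za[of i] by simp
        thus ?thesis using N0 Sr by (simp add: aa_def field_simps)
      qed
    qed
    moreover have "\<forall>j. Br r j = (NN r c / SS c) * c$j powr (pp-1)"
    proof
      fix j show "Br r j = (NN r c / SS c) * c$j powr (pp-1)"
      proof (cases "c$j = 0")
        case True
        have "bb r c j \<le> 0" using H by simp
        hence "Br r j \<le> 0" using True N0 by (simp add: bb_def divide_le_0_iff)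
        thus ?thesis using Br_nonneg[OF r(1), of j] True by simp
      next
        case False
        hence "bb r c j = 0" using zb[of j] by simp
        thus ?thesis using N0 Sc by (simp add: bb_def field_simps)
      qed
    qed
    ultimately show "fpc r c" unfolding fpc_def using N0 Sr Sc by (meson divide_pos_pos)
  next
    assume "fpc r c"
    then obtain \<kappa> \<mu> where k: "\<kappa> > 0" "\<forall>i. Bc c i = \<kappa> * r$i powr (pp-1)"
      and m: "\<mu> > 0" "\<forall>j. Br r j = \<mu> * c$j powr (pp-1)" unfolding fpc_def by blast
    have rr: "(\<Sum>i\<in>UNIV. r$i * r$i powr (pp-1)) = SS r"
      unfolding SS_def using r(1) by (intro sum.cong refl) (simp add: powr_mult_base)
    have cc: "(\<Sum>i\<in>UNIV. c$i * c$i powr (pp-1)) = SS c"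
      unfolding SS_def using c(1) by (intro sum.cong refl) (simp add: powr_mult_base)
    have N1: "NN r c = \<kappa> * SS r" unfolding NN_Bc rr[symmetric] using k(2)
      by (simp add: sum_distrib_left ac_simps)
    have N2: "NN r c = \<mu> * SS c" unfolding NN_Br cc[symmetric] using m(2)
      by (simp add: sum_distrib_left ac_simps)
    have N0: "NN r c > 0" using N1 k Sr by simp
    have "aa r c i = 0" for i using k Sr unfolding aa_def N1 by simp
    moreover have "bb r c j = 0" for j using m Sc unfolding bb_def N2 by simp
    ultimately show "NN r c > 0 \<and> (\<forall>i. aa r c i \<le> 0) \<and> (\<forall>j. bb r c j \<le> 0)" using N0 by simp
  qed
qed

lemma real_Dm1': "real (D - Suc 0) = real D - 1" using D3 by simp
lemma pm1_Dm1': "(pp - 1) * (real D - 1) = 1" using pm1_Dm1 real_Dm1 by simp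

lemma pow_to_root:
  assumes "0 \<le> y" "0 \<le> x" "0 < k" "y ^ (D-1) = k * x"
  shows "y = k powr (pp-1) * x powr (pp-1)"
proof -
  have n: "D - 1 \<noteq> 0" using D3 by simp
  have "y = y powr (real (D-1) * (pp-1))" using pm1_Dm1' assms(1) by (simp add: powr_one mult.commute real_Dm1')
  also have "\<dots> = (y powr real (D-1)) powr (pp-1)" by (simp add: powr_powr)
  also have "y powr real (D-1) = y ^ (D-1)" using powr_realpow'[OF assms(1) n] .
  also have "\<dots> = k * x" by fact
  finally show ?thesis by (simp add: powr_mult)
qed

lemma root_to_pow:
  assumes "0 \<le> x" "0 < \<kappa>" "y = \<kappa> * x powr (pp-1)"
  shows "y ^ (D-1) = \<kappa> powr real (D-1) * x"
proof -
  have n: "D - 1 \<noteq> 0" using D3 by simp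
  have "y ^ (D-1) = y powr real (D-1)" using powr_realpow'[of y "D-1"] assms n
    by (simp add: mult_nonneg_nonneg)
  also have "\<dots> = \<kappa> powr real (D-1) * (x powr (pp-1)) powr real (D-1)" by (simp add: assms(3) powr_mult)
  also have "(x powr (pp-1)) powr real (D-1) = x" using pm1_Dm1' assms(1) by (simp add: powr_powr powr_one real_Dm1')
  finally show ?thesis .
qed

lemma tree_fixpoint_iff:
  fixes r c :: "real^'q"
  assumes "\<forall>i. 0 \<le> r$i" "\<forall>i. 0 \<le> c$i"
  shows "tree_fixpoint B D r c \<longleftrightarrow> fpc r c"
proof
  assume "tree_fixpoint B D r c"
  then obtain k \<mu> where k: "k>0" "\<forall>i. (Bc c i) ^ (D - 1) = k * r$i"
    and m: "\<mu>>0" "\<forall>j. (Br r j) ^ (D - 1) = \<mu> * c$j"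
    unfolding tree_fixpoint_def Bc_def Br_def by blast
  have "\<forall>i. Bc c i = k powr (pp-1) * r$i powr (pp-1)"
    using pow_to_root Bc_nonneg[OF assms(2)] assms(1) k by blast
  moreover have "\<forall>j. Br r j = \<mu> powr (pp-1) * c$j powr (pp-1)"
    using pow_to_root Br_nonneg[OF assms(1)] assms(2) m by blast
  moreover have "k powr (pp-1) > 0" "\<mu> powr (pp-1) > 0" using k m by auto
  ultimately show "fpc r c" unfolding fpc_def by blast
next
  assume "fpc r c"
  then obtain \<kappa> \<mu> where k: "\<kappa> > 0" "\<forall>i. Bc c i = \<kappa> * r$i powr (pp-1)"
    and m: "\<mu> > 0" "\<forall>j. Br r j = \<mu> * c$j powr (pp-1)" unfolding fpc_def by blast
  have "\<forall>i. (Bc c i) ^ (D-1) = \<kappa> powr real (D-1) * r$i" using root_to_pow k assms by blast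
  moreover have "\<forall>j. (Br r j) ^ (D-1) = \<mu> powr real (D-1) * c$j" using root_to_pow m assms by blast
  moreover have "\<kappa> powr real (D-1) > 0" "\<mu> powr real (D-1) > 0" using k m by auto
  ultimately show "tree_fixpoint B D r c" unfolding tree_fixpoint_def Bc_def[symmetric] Br_def[symmetric]
    by blast
qed

lemma crit_Phi_fpc:
  fixes r c :: "real^'q"
  assumes "(r,c) \<in> PhiDom"
  shows "crit_point (Phi B D) PhiDom (r,c) \<longleftrightarrow> fpc r c"
  using crit_Phi_iff[OF assms] fpc_iff[OF assms] by simp

end

context spin begin

definition GG :: "real^'q \<Rightarrow> real^'q \<Rightarrow> real" where
  "GG a b = (\<Sum>i\<in>UNIV. \<Sum>j\<in>UNIV. B$i$j * a$i powr ss * b$j powr ss)"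

definition rt :: "real^'q \<Rightarrow> real^'q" where
  "rt a = (\<chi> i. a$i powr ss)"

lemma fpc_scale1:
  assumes "fpc r c" "a > 0" "b > 0"
  shows "fpc (a *\<^sub>R r) (b *\<^sub>R c)"
proof -
  obtain \<kappa> \<mu> where k: "\<kappa> > 0" "\<forall>i. Bc c i = \<kappa> * r$i powr (pp-1)"
    and m: "\<mu> > 0" "\<forall>j. Br r j = \<mu> * c$j powr (pp-1)" using assms(1) unfolding fpc_def by blast
  have "\<forall>i. Bc (b *\<^sub>R c) i = (b * \<kappa> / a powr (pp-1)) * (a *\<^sub>R r)$i powr (pp-1)"
  proof
    fix i
    have "Bc (b *\<^sub>R c) i = b * Bc c i" by (simp add: Bc_def sum_distrib_left ac_simps)
    thus "Bc (b *\<^sub>R c) i = (b * \<kappa> / a powr (pp-1)) * (a *\<^sub>R r)$i powr (pp-1)"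
      using k assms by (simp add: powr_mult)
  qed
  moreover have "\<forall>j. Br (a *\<^sub>R r) j = (a * \<mu> / b powr (pp-1)) * (b *\<^sub>R c)$j powr (pp-1)"
  proof
    fix j
    have "Br (a *\<^sub>R r) j = a * Br r j" by (simp add: Br_def sum_distrib_left ac_simps)
    thus "Br (a *\<^sub>R r) j = (a * \<mu> / b powr (pp-1)) * (b *\<^sub>R c)$j powr (pp-1)"
      using m assms by (simp add: powr_mult)
  qed
  moreover have "b * \<kappa> / a powr (pp-1) > 0" "a * \<mu> / b powr (pp-1) > 0" using k m assms by auto
  ultimately show ?thesis unfolding fpc_def by blast
qed

lemma fpc_scale:
  assumes "a > 0" "b > 0"
  shows "fpc (a *\<^sub>R r) (b *\<^sub>R c) \<longleftrightarrow> fpc r c"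
  using fpc_scale1[OF _ assms] fpc_scale1[of "a *\<^sub>R r" "b *\<^sub>R c" "1/a" "1/b"] assms by auto

lemma Tmap_rt:
  assumes "(r,c) \<in> PhiDom"
  shows "rt (fst (Tmap D (r,c))) = (1 / pnorm pp r) *\<^sub>R r" "rt (snd (Tmap D (r,c))) = (1 / pnorm pp c) *\<^sub>R c"
  using Tmap_root[of r] Tmap_root[of c] assms unfolding Tmap_eq rt_def PhiDom_def by auto

lemma Tmap_fpc:
  assumes "(r,c) \<in> PhiDom"
  shows "fpc r c \<longleftrightarrow> fpc (rt (fst (Tmap D (r,c)))) (rt (snd (Tmap D (r,c))))"
proof -
  have "pnorm pp r > 0" "pnorm pp c > 0" using pnorm_pos assms unfolding PhiDom_def by auto
  thus ?thesis unfolding Tmap_rt[OF assms] by (simp add: fpc_scale)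
qed

lemma Phi_G:
  assumes "(r,c) \<in> PhiDom"
  shows "Phi B D (r,c) = (if GG (fst (Tmap D (r,c))) (snd (Tmap D (r,c))) > 0
           then ereal (real D * ln (GG (fst (Tmap D (r,c))) (snd (Tmap D (r,c))))) else -\<infinity>)"
proof -
  have r: "\<forall>i. 0 \<le> r$i" "r \<noteq> 0" and c: "\<forall>i. 0 \<le> c$i" "c \<noteq> 0" using assms by (auto simp: PhiDom_def)
  define a where "a = fst (Tmap D (r,c))"
  define b where "b = snd (Tmap D (r,c))"
  have ra: "a$i powr ss = r$i / pnorm pp r" for i
    using Tmap_rt(1)[OF assms] unfolding a_def[symmetric] rt_def by (simp add: vec_eq_iff)
  have rb: "b$i powr ss = c$i / pnorm pp c" for i
    using Tmap_rt(2)[OF assms] unfolding b_def[symmetric] rt_def by (simp add: vec_eq_iff)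
  have "GG a b = (r \<bullet> (B *v c)) / (pnorm pp r * pnorm pp c)"
    by (simp add: GG_def ra rb inner_vec_def matrix_vector_mult_def sum_distrib_left sum_divide_distrib ac_simps)
  thus ?thesis unfolding Phi_def Let_def a_def b_def by simp
qed

end

lemma ereal_sum_minf:
  fixes f :: "'a \<Rightarrow> ereal"
  assumes "finite A" "a \<in> A" "f a = -\<infinity>" "\<forall>x\<in>A. f x \<noteq> \<infinity>"
  shows "sum f A = -\<infinity>"
proof -
  have "sum f A = f a + sum f (A - {a})" using assms by (simp add: sum.remove)
  moreover have "sum f (A - {a}) \<noteq> \<infinity>" using assms by (simp add: sum_Pinfty)
  ultimately show ?thesis using assms(3) by simp
qed

lemma xlogterm_ninf: "xlogterm b x \<noteq> \<infinity>" by (simp add: xlogterm_def)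

context spin begin

definition plans :: "real^'q \<Rightarrow> real^'q \<Rightarrow> (real^'q^'q) set" where
  "plans a b = {x :: real^'q^'q. (\<forall>i j. 0 \<le> x$i$j) \<and> (\<forall>i. (\<Sum>j\<in>UNIV. x$i$j) = a$i)
                                      \<and> (\<forall>j. (\<Sum>i\<in>UNIV. x$i$j) = b$j)}"
definition val :: "real^'q^'q \<Rightarrow> ereal" where
  "val x = (\<Sum>i\<in>UNIV. \<Sum>j\<in>UNIV. xlogterm (B$i$j) (x$i$j))"
definition AA :: "real^'q \<Rightarrow> real^'q \<Rightarrow> real" where
  "AA a b = (real D - 1) * ((\<Sum>i\<in>UNIV. a$i * ln (a$i)) + (\<Sum>j\<in>UNIV. b$j * ln (b$j)))"
definition sok :: "real^'q^'q \<Rightarrow> bool" where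
  "sok x \<longleftrightarrow> (\<forall>i j. 0 < x$i$j \<longrightarrow> 0 < B$i$j)"
definition vr :: "real^'q^'q \<Rightarrow> real" where
  "vr x = (\<Sum>i\<in>UNIV. \<Sum>j\<in>UNIV. (x$i$j * ln (B$i$j) - x$i$j * ln (x$i$j)))"
definition yy :: "real^'q \<Rightarrow> real^'q \<Rightarrow> 'q \<Rightarrow> 'q \<Rightarrow> real" where
  "yy a b i j = B$i$j * a$i powr ss * b$j powr ss"

lemma Psi1_eq: "Psi1 B D (a,b) = ereal (AA a b) + ereal (real D) * (SUP x\<in>plans a b. val x)"
  by (simp add: Psi1_def AA_def plans_def val_def)

lemma val_sok:
  assumes "\<forall>i j. 0 \<le> x$i$j" "sok x"
  shows "val x = ereal (vr x)"
proof -
  have "xlogterm (B$i$j) (x$i$j) = ereal (x$i$j * ln (B$i$j) - x$i$j * ln (x$i$j))" for i j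
  proof (cases "x$i$j = 0")
    case False
    hence "x$i$j > 0" using assms(1) by (simp add: order_le_neq_trans)
    hence "B$i$j > 0" using assms(2) by (simp add: sok_def)
    thus ?thesis using False by (simp add: xlogterm_def right_diff_distrib)
  qed (simp add: xlogterm_def)
  thus ?thesis by (simp add: val_def vr_def)
qed

lemma val_nsok:
  assumes "\<forall>i j. 0 \<le> x$i$j" "\<not> sok x"
  shows "val x = -\<infinity>"
proof -
  obtain i j where ij: "0 < x$i$j" "\<not> 0 < B$i$j" using assms(2) by (auto simp: sok_def)
  hence "B$i$j = 0" using Bnn[of i j] by simp
  hence "xlogterm (B$i$j) (x$i$j) = -\<infinity>" using ij by (simp add: xlogterm_def)
  hence "(\<Sum>j\<in>UNIV. xlogterm (B$i$j) (x$i$j)) = -\<infinity>"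
    by (intro ereal_sum_minf[of _ j]) (auto simp: xlogterm_ninf)
  moreover have "\<forall>i'. (\<Sum>j\<in>UNIV. xlogterm (B$i'$j) (x$i'$j)) \<noteq> \<infinity>"
    by (simp add: sum_Pinfty xlogterm_ninf)
  ultimately show ?thesis unfolding val_def
    using ereal_sum_minf[of UNIV i "\<lambda>i. \<Sum>j\<in>UNIV. xlogterm (B$i$j) (x$i$j)"] by simp
qed

lemma plan_entry_le:
  assumes "x \<in> plans a b"
  shows "x$i$j \<le> a$i" "x$i$j \<le> b$j"
proof -
  have nn: "\<forall>i j. 0 \<le> x$i$j" using assms by (simp add: plans_def)
  have "x$i$j \<le> (\<Sum>j\<in>UNIV. x$i$j)" by (rule member_le_sum) (use nn in auto)
  thus "x$i$j \<le> a$i" using assms by (simp add: plans_def)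
  have "x$i$j \<le> (\<Sum>i\<in>UNIV. x$i$j)" by (rule member_le_sum) (use nn in auto)
  thus "x$i$j \<le> b$j" using assms by (simp add: plans_def)
qed

lemma W_eq:
  assumes x: "x \<in> plans a b" and s: "sok x"
  shows "AA a b + real D * vr x = real D * (\<Sum>i\<in>UNIV. \<Sum>j\<in>UNIV. x$i$j * ln (yy a b i j / x$i$j))"
proof -
  have nn: "\<forall>i j. 0 \<le> x$i$j" using x by (simp add: plans_def)
  have rows: "\<forall>i. (\<Sum>j\<in>UNIV. x$i$j) = a$i" and cols: "\<forall>j. (\<Sum>i\<in>UNIV. x$i$j) = b$j"
    using x by (auto simp: plans_def)
  have "(\<Sum>i\<in>UNIV. \<Sum>j\<in>UNIV. x$i$j * ln (a$i)) = (\<Sum>i\<in>UNIV. (\<Sum>j\<in>UNIV. x$i$j) * ln (a$i))"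
    by (simp add: sum_distrib_right)
  also have "\<dots> = (\<Sum>i\<in>UNIV. a$i * ln (a$i))" using rows by simp
  finally have ea: "(\<Sum>i\<in>UNIV. a$i * ln (a$i)) = (\<Sum>i\<in>UNIV. \<Sum>j\<in>UNIV. x$i$j * ln (a$i))" by simp
  have "(\<Sum>j\<in>UNIV. \<Sum>i\<in>UNIV. x$i$j * ln (b$j)) = (\<Sum>j\<in>UNIV. (\<Sum>i\<in>UNIV. x$i$j) * ln (b$j))"
    by (simp add: sum_distrib_right)
  also have "\<dots> = (\<Sum>j\<in>UNIV. b$j * ln (b$j))" using cols by simp
  finally have "(\<Sum>j\<in>UNIV. b$j * ln (b$j)) = (\<Sum>j\<in>UNIV. \<Sum>i\<in>UNIV. x$i$j * ln (b$j))" by simp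
  also have "\<dots> = (\<Sum>i\<in>UNIV. \<Sum>j\<in>UNIV. x$i$j * ln (b$j))" by (rule sum.swap)
  finally have eb: "(\<Sum>j\<in>UNIV. b$j * ln (b$j)) = (\<Sum>i\<in>UNIV. \<Sum>j\<in>UNIV. x$i$j * ln (b$j))" .
  have tm: "(real D - 1) * (x$i$j * ln (a$i) + x$i$j * ln (b$j)) + real D * (x$i$j * ln (B$i$j) - x$i$j * ln (x$i$j))
      = real D * (x$i$j * ln (yy a b i j / x$i$j))" for i j
  proof (cases "x$i$j = 0")
    case False
    hence xp: "x$i$j > 0" using nn by (simp add: order_le_neq_trans)
    hence Bp: "B$i$j > 0" using s by (simp add: sok_def)
    have ap: "a$i > 0" using xp plan_entry_le[OF x, of i j] by simp
    have bp: "b$j > 0" using xp plan_entry_le[OF x, of i j] by simp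
    have eq: "ln (yy a b i j / x$i$j) = ln (B$i$j) + ss * ln (a$i) + ss * ln (b$j) - ln (x$i$j)"
      using xp Bp ap bp by (simp add: yy_def ln_div ln_mult)
    show ?thesis unfolding Dm1 eq by (simp add: algebra_simps)
  qed simp
  have "AA a b + real D * vr x = (\<Sum>i\<in>UNIV. \<Sum>j\<in>UNIV. (real D - 1) * (x$i$j * ln (a$i) + x$i$j * ln (b$j))
        + real D * (x$i$j * ln (B$i$j) - x$i$j * ln (x$i$j)))"
    unfolding AA_def ea eb vr_def by (simp add: sum.distrib sum_distrib_left distrib_left)
  also have "\<dots> = real D * (\<Sum>i\<in>UNIV. \<Sum>j\<in>UNIV. x$i$j * ln (yy a b i j / x$i$j))"
    unfolding tm by (simp add: sum_distrib_left)
  finally show ?thesis .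
qed

lemma sum_yy: "(\<Sum>i\<in>UNIV. \<Sum>j\<in>UNIV. yy a b i j) = GG a b"
  by (simp add: yy_def GG_def)

lemma yy_nonneg: "0 \<le> yy a b i j"
  using Bnn by (simp add: yy_def)

lemma Gibbs:
  assumes x: "x \<in> plans a b" and s: "sok x" and a1: "(\<Sum>i\<in>UNIV. a$i) = 1"
  shows "GG a b > 0 \<and> (\<Sum>i\<in>UNIV. \<Sum>j\<in>UNIV. x$i$j * ln (yy a b i j / x$i$j)) \<le> ln (GG a b)"
proof -
  have nn: "\<forall>i j. 0 \<le> x$i$j" using x by (simp add: plans_def)
  have x1: "(\<Sum>i\<in>UNIV. \<Sum>j\<in>UNIV. x$i$j) = 1" using x a1 by (simp add: plans_def)
  obtain i j where xp: "x$i$j > 0"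
  proof (rule ccontr)
    assume "\<not> thesis"
    hence "\<forall>i j. x$i$j = 0" using that nn by (metis order_le_neq_trans)
    thus False using x1 by simp
  qed
  have ypos: "yy a b i j > 0"
  proof -
    have Bp: "B$i$j > 0" using s xp by (simp add: sok_def)
    have ap: "a$i > 0" using xp plan_entry_le[OF x, of i j] by simp
    have bp: "b$j > 0" using xp plan_entry_le[OF x, of i j] by simp
    show ?thesis using Bp ap bp by (simp add: yy_def)
  qed
  have "yy a b i j \<le> (\<Sum>j\<in>UNIV. yy a b i j)" by (rule member_le_sum) (auto simp: yy_nonneg)
  also have "\<dots> \<le> (\<Sum>i\<in>UNIV. \<Sum>j\<in>UNIV. yy a b i j)" by (rule member_le_sum) (auto intro: sum_nonneg simp: yy_nonneg)
  finally have Gp: "GG a b > 0" using ypos sum_yy by simp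
  have tm: "x$i$j * ln (yy a b i j / x$i$j) \<le> yy a b i j / GG a b - x$i$j + x$i$j * ln (GG a b)" for i j
  proof (cases "x$i$j = 0")
    case True thus ?thesis using yy_nonneg[of a b i j] Gp by simp
  next
    case False
    hence xp: "x$i$j > 0" using nn by (simp add: order_le_neq_trans)
    have Bp: "B$i$j > 0" using s xp by (simp add: sok_def)
    have ap: "a$i > 0" using xp plan_entry_le[OF x, of i j] by simp
    have bp: "b$j > 0" using xp plan_entry_le[OF x, of i j] by simp
    have yp: "yy a b i j > 0" using Bp ap bp by (simp add: yy_def)
    have "ln (yy a b i j / x$i$j) = ln (yy a b i j / (x$i$j * GG a b)) + ln (GG a b)"
      using yp xp Gp by (simp add: ln_div ln_mult)
    also have "\<dots> \<le> yy a b i j / (x$i$j * GG a b) - 1 + ln (GG a b)"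
      using ln_le_minus_one[of "yy a b i j / (x$i$j * GG a b)"] yp xp Gp by simp
    finally have "x$i$j * ln (yy a b i j / x$i$j) \<le> x$i$j * (yy a b i j / (x$i$j * GG a b) - 1 + ln (GG a b))"
      using xp by (simp add: mult_left_mono)
    also have "\<dots> = yy a b i j / GG a b - x$i$j + x$i$j * ln (GG a b)"
      using xp Gp by (simp add: field_simps)
    finally show ?thesis .
  qed
  have "(\<Sum>i\<in>UNIV. \<Sum>j\<in>UNIV. x$i$j * ln (yy a b i j / x$i$j))
      \<le> (\<Sum>i\<in>UNIV. \<Sum>j\<in>UNIV. yy a b i j / GG a b - x$i$j + x$i$j * ln (GG a b))"
    by (intro sum_mono tm)
  also have "\<dots> = (\<Sum>i\<in>UNIV. \<Sum>j\<in>UNIV. yy a b i j) / GG a b - (\<Sum>i\<in>UNIV. \<Sum>j\<in>UNIV. x$i$j)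
      + (\<Sum>i\<in>UNIV. \<Sum>j\<in>UNIV. x$i$j) * ln (GG a b)"
    by (simp add: sum.distrib sum_subtractf sum_divide_distrib sum_distrib_right)
  also have "\<dots> = ln (GG a b)" using Gp x1 sum_yy by simp
  finally show ?thesis using Gp by simp
qed

end

context spin begin

lemma SimDom_simp: "(a,b) \<in> SimDom \<longleftrightarrow> (\<forall>i. 0 \<le> a$i) \<and> (\<Sum>i\<in>UNIV. a$i) = 1 \<and> (\<forall>j. 0 \<le> b$j) \<and> (\<Sum>j\<in>UNIV. b$j) = 1"
  by (simp add: SimDom_def)

lemma Psi1_lower:
  assumes "x \<in> plans a b" "sok x"
  shows "ereal (AA a b + real D * vr x) \<le> Psi1 B D (a,b)"
proof -
  have nn: "\<forall>i j. 0 \<le> x$i$j" using assms by (simp add: plans_def)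
  have "val x \<le> (SUP x\<in>plans a b. val x)" using assms(1) by (rule SUP_upper)
  hence "ereal (real D) * val x \<le> ereal (real D) * (SUP x\<in>plans a b. val x)"
    by (rule ereal_mult_left_mono) simp
  hence "ereal (AA a b) + ereal (real D) * val x \<le> Psi1 B D (a,b)"
    unfolding Psi1_eq by (rule add_mono[OF order_refl])
  thus ?thesis using val_sok[OF nn assms(2)] by simp
qed

lemma Psi1_upper:
  assumes "(a,b) \<in> SimDom"
  shows "Psi1 B D (a,b) \<le> (if GG a b > 0 then ereal (real D * ln (GG a b)) else -\<infinity>)"
proof -
  have a1: "(\<Sum>i\<in>UNIV. a$i) = 1" using assms by (simp add: SimDom_def)
  define bd where "bd = (if GG a b > 0 then ereal ((real D * ln (GG a b) - AA a b) / real D) else -\<infinity>)"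
  have "val x \<le> bd" if x: "x \<in> plans a b" for x
  proof (cases "sok x")
    case True
    have nn: "\<forall>i j. 0 \<le> x$i$j" using x by (simp add: plans_def)
    from Gibbs[OF x True a1] have G: "GG a b > 0"
      and le: "(\<Sum>i\<in>UNIV. \<Sum>j\<in>UNIV. x$i$j * ln (yy a b i j / x$i$j)) \<le> ln (GG a b)" by auto
    have "AA a b + real D * vr x \<le> real D * ln (GG a b)"
      unfolding W_eq[OF x True] using le Dpos by (simp add: mult_left_mono)
    hence "vr x \<le> (real D * ln (GG a b) - AA a b) / real D" using Dpos by (simp add: field_simps)
    thus ?thesis using val_sok[OF nn True] G by (simp add: bd_def)
  next
    case False
    have nn: "\<forall>i j. 0 \<le> x$i$j" using x by (simp add: plans_def)
    show ?thesis using val_nsok[OF nn False] by simp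
  qed
  hence "(SUP x\<in>plans a b. val x) \<le> bd" by (rule SUP_least)
  hence "ereal (real D) * (SUP x\<in>plans a b. val x) \<le> ereal (real D) * bd"
    by (rule ereal_mult_left_mono) simp
  hence "Psi1 B D (a,b) \<le> ereal (AA a b) + ereal (real D) * bd"
    unfolding Psi1_eq by (rule add_mono[OF order_refl])
  also have "\<dots> = (if GG a b > 0 then ereal (real D * ln (GG a b)) else -\<infinity>)"
    using Dpos by (simp add: bd_def)
  finally show ?thesis .
qed

lemma Psi1_ninf: "(a,b) \<in> SimDom \<Longrightarrow> Psi1 B D (a,b) \<noteq> \<infinity>"
  using Psi1_upper[of a b] by (auto split: if_splits)

lemma powr_ss_comp: "0 \<le> x \<Longrightarrow> x powr ss * x powr (1 - ss) = x"
  by (simp add: powr_add[symmetric] powr_one)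

lemma Psi1_fp:
  assumes ab: "(a,b) \<in> SimDom" and f: "fpc (rt a) (rt b)"
  shows "GG a b > 0 \<and> Psi1 B D (a,b) = ereal (real D * ln (GG a b))"
proof -
  have a0: "\<forall>i. 0 \<le> a$i" and a1: "(\<Sum>i\<in>UNIV. a$i) = 1" and b0: "\<forall>j. 0 \<le> b$j" and b1: "(\<Sum>j\<in>UNIV. b$j) = 1"
    using ab by (auto simp: SimDom_def)
  obtain \<kappa> \<mu> where k: "\<kappa> > 0" "\<forall>i. Bc (rt b) i = \<kappa> * (rt a)$i powr (pp-1)"
    and m: "\<mu> > 0" "\<forall>j. Br (rt a) j = \<mu> * (rt b)$j powr (pp-1)" using f unfolding fpc_def by blast
  have k': "(\<Sum>j\<in>UNIV. B$i$j * b$j powr ss) = \<kappa> * a$i powr (1 - ss)" for i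
    using k(2) by (simp add: Bc_def rt_def powr_powr ss_pm1)
  have m': "(\<Sum>i\<in>UNIV. B$i$j * a$i powr ss) = \<mu> * b$j powr (1 - ss)" for j
    using m(2) by (simp add: Br_def rt_def powr_powr ss_pm1)
  have row: "(\<Sum>j\<in>UNIV. yy a b i j) = \<kappa> * a$i" for i
  proof -
    have "(\<Sum>j\<in>UNIV. yy a b i j) = a$i powr ss * (\<Sum>j\<in>UNIV. B$i$j * b$j powr ss)"
      by (simp add: yy_def sum_distrib_left ac_simps)
    also have "\<dots> = \<kappa> * (a$i powr ss * a$i powr (1 - ss))" by (simp add: k')
    finally show ?thesis using powr_ss_comp a0 by simp
  qed
  have col: "(\<Sum>i\<in>UNIV. yy a b i j) = \<mu> * b$j" for j
  proof -
    have "(\<Sum>i\<in>UNIV. yy a b i j) = b$j powr ss * (\<Sum>i\<in>UNIV. B$i$j * a$i powr ss)"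
      by (simp add: yy_def sum_distrib_left ac_simps)
    also have "\<dots> = \<mu> * (b$j powr ss * b$j powr (1 - ss))" by (simp add: m')
    finally show ?thesis using powr_ss_comp b0 by simp
  qed
  have Gk: "GG a b = \<kappa>" unfolding sum_yy[symmetric] row by (simp add: sum_distrib_left[symmetric] a1)
  have Gm: "GG a b = \<mu>"
  proof -
    have "GG a b = (\<Sum>j\<in>UNIV. \<Sum>i\<in>UNIV. yy a b i j)" unfolding sum_yy[symmetric] by (rule sum.swap)
    thus ?thesis unfolding col by (simp add: sum_distrib_left[symmetric] b1)
  qed
  have Gp: "GG a b > 0" using Gk k by simp
  define x where "x = (\<chi> i j. yy a b i j / GG a b)"
  have xe: "x$i$j = yy a b i j / GG a b" for i j by (simp add: x_def)
  have xp: "x \<in> plans a b"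
    unfolding plans_def using Gp yy_nonneg
    by (auto simp: xe sum_divide_distrib[symmetric] row col Gk[symmetric] Gm[symmetric])
  have xs: "sok x"
    unfolding sok_def xe using Gp Bnn by (auto simp: yy_def zero_less_divide_iff zero_less_mult_iff)
  have "(\<Sum>i\<in>UNIV. \<Sum>j\<in>UNIV. x$i$j * ln (yy a b i j / x$i$j)) = (\<Sum>i\<in>UNIV. \<Sum>j\<in>UNIV. x$i$j * ln (GG a b))"
  proof (intro sum.cong refl)
    fix i j
    show "x$i$j * ln (yy a b i j / x$i$j) = x$i$j * ln (GG a b)"
    proof (cases "x$i$j = 0")
      case False
      hence "yy a b i j \<noteq> 0" by (simp add: xe)
      thus ?thesis using Gp by (simp add: xe)
    qed simp
  qed
  also have "\<dots> = ln (GG a b)"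
    by (simp add: sum_distrib_right[symmetric] xe sum_divide_distrib[symmetric] sum_yy Gp)
  finally have "AA a b + real D * vr x = real D * ln (GG a b)" using W_eq[OF xp xs] by simp
  hence "ereal (real D * ln (GG a b)) \<le> Psi1 B D (a,b)" using Psi1_lower[OF xp xs] by simp
  moreover have "Psi1 B D (a,b) \<le> ereal (real D * ln (GG a b))" using Psi1_upper[OF ab] Gp by simp
  ultimately show ?thesis using Gp by simp
qed

end

lemma prod_term_deriv:
  fixes a0 a1 b0 b1 Bv s :: real
  assumes nn: "0 \<le> a0" "0 \<le> a1" "0 \<le> b0" "0 \<le> b1" "0 \<le> Bv" and s: "0 < s" "2 * s > 1"
    and ex1: "\<not> (Bv > 0 \<and> a0 = 0 \<and> b0 > 0)" and ex2: "\<not> (Bv > 0 \<and> b0 = 0 \<and> a0 > 0)"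
  shows "((\<lambda>t. Bv * (a0 + t*(a1-a0)) powr s * (b0 + t*(b1-b0)) powr s) has_real_derivative
          Bv * s * (a0 powr (s-1) * (a1-a0) * b0 powr s + a0 powr s * b0 powr (s-1) * (b1-b0))) (at_right 0)"
proof (cases "Bv = 0")
  case True thus ?thesis by simp
next
  case False
  hence Bp: "Bv > 0" using nn by simp
  show ?thesis
  proof (cases "a0 = 0")
    case a0: True
    hence b0: "b0 = 0" using ex1 Bp nn by auto
    have lim: "((\<lambda>t::real. Bv * (a1 * b1) powr s * t powr (2 * s - 1)) \<longlongrightarrow> Bv * (a1 * b1) powr s * 0) (at_right 0)"
    proof -
      have l1: "((\<lambda>t::real. t) \<longlongrightarrow> 0) (at_right 0)" by (rule tendsto_ident_at)
      have "\<forall>\<^sub>F t::real in at_right 0. 0 \<le> t"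
        by (rule eventually_mono[OF eventually_at_right_less]) simp
      hence "((\<lambda>t::real. t powr (2 * s-1)) \<longlongrightarrow> 0) (at_right 0)"
        using tendsto_zero_powrI[OF l1 tendsto_const, of "2 * s-1"] s by simp
      thus ?thesis by (intro tendsto_mult tendsto_const)
    qed
    have ev: "\<forall>\<^sub>F t in at_right 0. Bv * (a1 * b1) powr s * t powr (2 * s - 1) =
       (Bv * (a0 + t*(a1-a0)) powr s * (b0 + t*(b1-b0)) powr s - Bv * (a0 + 0*(a1-a0)) powr s * (b0 + 0*(b1-b0)) powr s) / (t - 0)"
    proof (rule eventually_at_rightI[of 0 1])
      fix t :: real assume t: "t \<in> {0<..<1}"
      have "t powr (2 * s - 1) = t powr s * t powr s / t" using t
        by (simp add: powr_add[symmetric] powr_diff)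
      thus "Bv * (a1 * b1) powr s * t powr (2 * s - 1) =
       (Bv * (a0 + t*(a1-a0)) powr s * (b0 + t*(b1-b0)) powr s - Bv * (a0 + 0*(a1-a0)) powr s * (b0 + 0*(b1-b0)) powr s) / (t - 0)"
        using a0 b0 by (simp add: powr_mult)
    qed simp
    have "((\<lambda>t. (Bv * (a0 + t*(a1-a0)) powr s * (b0 + t*(b1-b0)) powr s - Bv * (a0 + 0*(a1-a0)) powr s * (b0 + 0*(b1-b0)) powr s) / (t - 0)) \<longlongrightarrow> 0) (at_right 0)"
      using tendsto_cong[OF ev] lim by simp
    thus ?thesis using a0 b0 unfolding has_field_derivative_iff by simp
  next
    case a0: False
    hence a0p: "a0 > 0" using nn by simp
    hence b0p: "b0 > 0" using ex2 Bp nn by (cases "b0 = 0") auto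
    have "((\<lambda>t. Bv * (a0 + t*(a1-a0)) powr s * (b0 + t*(b1-b0)) powr s) has_real_derivative
          Bv * (s * (a0 + 0*(a1-a0)) powr (s-1) * (0*0 + 1*(a1-a0))) * (b0 + 0*(b1-b0)) powr s
          + Bv * (a0 + 0*(a1-a0)) powr s * (s * (b0 + 0*(b1-b0)) powr (s-1) * (0*0 + 1*(b1-b0)))) (at 0)"
      using a0p b0p by (auto intro!: derivative_eq_intros)
    thus ?thesis by (simp add: has_field_derivative_at_within algebra_simps)
  qed
qed

context spin begin

lemma fpc_rows:
  assumes "\<forall>i. 0 \<le> a$i" "\<forall>j. 0 \<le> b$j" "fpc (rt a) (rt b)"
  shows "\<exists>\<kappa>>0. \<forall>i. (\<Sum>j\<in>UNIV. B$i$j * b$j powr ss) = \<kappa> * a$i powr (1 - ss)"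
    and "\<exists>\<mu>>0. \<forall>j. (\<Sum>i\<in>UNIV. B$i$j * a$i powr ss) = \<mu> * b$j powr (1 - ss)"
proof -
  obtain \<kappa> \<mu> where k: "\<kappa> > 0" "\<forall>i. Bc (rt b) i = \<kappa> * (rt a)$i powr (pp-1)"
    and m: "\<mu> > 0" "\<forall>j. Br (rt a) j = \<mu> * (rt b)$j powr (pp-1)" using assms(3) unfolding fpc_def by blast
  show "\<exists>\<kappa>>0. \<forall>i. (\<Sum>j\<in>UNIV. B$i$j * b$j powr ss) = \<kappa> * a$i powr (1 - ss)"
    using k by (auto simp: Bc_def rt_def powr_powr ss_pm1)
  show "\<exists>\<mu>>0. \<forall>j. (\<Sum>i\<in>UNIV. B$i$j * a$i powr ss) = \<mu> * b$j powr (1 - ss)"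
    using m by (auto simp: Br_def rt_def powr_powr ss_pm1)
qed

lemma SimDom_path:
  fixes a b a' b' :: "real^'q"
  assumes "(a,b) \<in> SimDom" "(a',b') \<in> SimDom" "0 \<le> t" "t \<le> 1"
  shows "(a + t *\<^sub>R (a' - a), b + t *\<^sub>R (b' - b)) \<in> SimDom"
proof -
  have cv: "(\<forall>i. 0 \<le> (v + t *\<^sub>R (v' - v))$i) \<and> (\<Sum>i\<in>UNIV. (v + t *\<^sub>R (v' - v))$i) = 1"
    if H: "\<forall>i. 0 \<le> v$i" "(\<Sum>i\<in>UNIV. v$i) = 1" "\<forall>i. 0 \<le> v'$i" "(\<Sum>i\<in>UNIV. v'$i) = 1" for v v' :: "real^'q"
  proof -
    have e: "(v + t *\<^sub>R (v' - v))$i = (1-t) * v$i + t * v'$i" for i by (simp add: algebra_simps)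
    show ?thesis unfolding e using H assms
      by (simp add: sum.distrib sum_distrib_left[symmetric] add_nonneg_nonneg)
  qed
  show ?thesis using cv[of a a'] cv[of b b'] assms by (auto simp: SimDom_def)
qed

end

context spin begin

lemma half_sum_nonpos:
  fixes a a' :: "real^'q"
  assumes "\<forall>i. 0 \<le> a$i" "(\<Sum>i\<in>UNIV. a$i) = 1" "\<forall>i. 0 \<le> a'$i" "(\<Sum>i\<in>UNIV. a'$i) = 1"
  shows "(\<Sum>i\<in>UNIV. a$i powr (ss-1) * a$i powr (1-ss) * (a'$i - a$i)) \<le> 0"
proof -
  have "(\<Sum>i\<in>UNIV. a$i powr (ss-1) * a$i powr (1-ss) * (a'$i - a$i)) \<le> (\<Sum>i\<in>UNIV. a'$i - a$i)"
  proof (intro sum_mono)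
    fix i
    have e: "a$i powr (ss-1) * a$i powr (1-ss) = (if a$i = 0 then 0 else 1)"
      by (simp add: powr_add[symmetric])
    show "a$i powr (ss-1) * a$i powr (1-ss) * (a'$i - a$i) \<le> a'$i - a$i"
      unfolding e using assms by auto
  qed
  also have "\<dots> = 0" using assms by (simp add: sum_subtractf)
  finally show ?thesis .
qed

lemma DG_nonpos:
  fixes a b a' b' :: "real^'q"
  assumes ab: "(a,b) \<in> SimDom" and ab': "(a',b') \<in> SimDom"
    and k: "\<kappa> > 0" "\<forall>i. (\<Sum>j\<in>UNIV. B$i$j * b$j powr ss) = \<kappa> * a$i powr (1 - ss)"
    and m: "\<mu> > 0" "\<forall>j. (\<Sum>i\<in>UNIV. B$i$j * a$i powr ss) = \<mu> * b$j powr (1 - ss)"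
  shows "(\<Sum>i\<in>UNIV. \<Sum>j\<in>UNIV. B$i$j * ss * (a$i powr (ss-1) * (a'$i - a$i) * b$j powr ss
            + a$i powr ss * b$j powr (ss-1) * (b'$j - b$j))) \<le> 0"
proof -
  have a: "\<forall>i. 0 \<le> a$i" "(\<Sum>i\<in>UNIV. a$i) = 1" "\<forall>i. 0 \<le> b$i" "(\<Sum>i\<in>UNIV. b$i) = 1"
    and a': "\<forall>i. 0 \<le> a'$i" "(\<Sum>i\<in>UNIV. a'$i) = 1" "\<forall>i. 0 \<le> b'$i" "(\<Sum>i\<in>UNIV. b'$i) = 1"
    using ab ab' by (auto simp: SimDom_def)
  have e1: "(\<Sum>i\<in>UNIV. \<Sum>j\<in>UNIV. B$i$j * ss * (a$i powr (ss-1) * (a'$i - a$i) * b$j powr ss))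
      = ss * \<kappa> * (\<Sum>i\<in>UNIV. a$i powr (ss-1) * a$i powr (1-ss) * (a'$i - a$i))"
  proof -
    have "(\<Sum>i\<in>UNIV. \<Sum>j\<in>UNIV. B$i$j * ss * (a$i powr (ss-1) * (a'$i - a$i) * b$j powr ss))
        = (\<Sum>i\<in>UNIV. ss * (a$i powr (ss-1) * (a'$i - a$i)) * (\<Sum>j\<in>UNIV. B$i$j * b$j powr ss))"
      by (simp add: sum_distrib_left ac_simps)
    also have "\<dots> = ss * \<kappa> * (\<Sum>i\<in>UNIV. a$i powr (ss-1) * a$i powr (1-ss) * (a'$i - a$i))"
      using k(2) by (simp add: sum_distrib_left ac_simps)
    finally show ?thesis .
  qed
  have e2: "(\<Sum>i\<in>UNIV. \<Sum>j\<in>UNIV. B$i$j * ss * (a$i powr ss * b$j powr (ss-1) * (b'$j - b$j)))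
      = ss * \<mu> * (\<Sum>j\<in>UNIV. b$j powr (ss-1) * b$j powr (1-ss) * (b'$j - b$j))"
  proof -
    have "(\<Sum>i\<in>UNIV. \<Sum>j\<in>UNIV. B$i$j * ss * (a$i powr ss * b$j powr (ss-1) * (b'$j - b$j)))
        = (\<Sum>j\<in>UNIV. \<Sum>i\<in>UNIV. B$i$j * ss * (a$i powr ss * b$j powr (ss-1) * (b'$j - b$j)))"
      by (rule sum.swap)
    also have "\<dots> = (\<Sum>j\<in>UNIV. ss * (b$j powr (ss-1) * (b'$j - b$j)) * (\<Sum>i\<in>UNIV. B$i$j * a$i powr ss))"
      by (simp add: sum_distrib_left ac_simps)
    also have "\<dots> = ss * \<mu> * (\<Sum>j\<in>UNIV. b$j powr (ss-1) * b$j powr (1-ss) * (b'$j - b$j))"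
      using m(2) by (simp add: sum_distrib_left ac_simps)
    finally show ?thesis .
  qed
  have s1: "(\<Sum>i\<in>UNIV. a$i powr (ss-1) * a$i powr (1-ss) * (a'$i - a$i)) \<le> 0"
    using half_sum_nonpos a a' by blast
  have s2: "(\<Sum>j\<in>UNIV. b$j powr (ss-1) * b$j powr (1-ss) * (b'$j - b$j)) \<le> 0"
    using half_sum_nonpos a a' by blast
  have "(\<Sum>i\<in>UNIV. \<Sum>j\<in>UNIV. B$i$j * ss * (a$i powr (ss-1) * (a'$i - a$i) * b$j powr ss
            + a$i powr ss * b$j powr (ss-1) * (b'$j - b$j)))
      = ss * \<kappa> * (\<Sum>i\<in>UNIV. a$i powr (ss-1) * a$i powr (1-ss) * (a'$i - a$i))
        + ss * \<mu> * (\<Sum>j\<in>UNIV. b$j powr (ss-1) * b$j powr (1-ss) * (b'$j - b$j))"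
    unfolding e1[symmetric] e2[symmetric] by (simp add: distrib_left sum.distrib)
  also have "\<dots> \<le> 0" using s1 s2 k m ss_pos
    by (intro add_nonpos_nonpos mult_nonneg_nonpos) auto
  finally show ?thesis .
qed

end

context spin begin

lemma fp_crit_Psi1:
  fixes a b :: "real^'q"
  assumes ab: "(a,b) \<in> SimDom" and f: "fpc (rt a) (rt b)"
  shows "crit_point (Psi1 B D) SimDom (a,b)"
proof -
  have a: "\<forall>i. 0 \<le> a$i" "\<forall>i. 0 \<le> b$i" using ab by (auto simp: SimDom_def)
  obtain \<kappa> where k: "\<kappa> > 0" "\<forall>i. (\<Sum>j\<in>UNIV. B$i$j * b$j powr ss) = \<kappa> * a$i powr (1 - ss)"
    using fpc_rows(1)[OF a f] by blast
  obtain \<mu> where m: "\<mu> > 0" "\<forall>j. (\<Sum>i\<in>UNIV. B$i$j * a$i powr ss) = \<mu> * b$j powr (1 - ss)"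
    using fpc_rows(2)[OF a f] by blast
  from Psi1_fp[OF ab f] have Gp: "GG a b > 0" and P0: "Psi1 B D (a,b) = ereal (real D * ln (GG a b))" by auto
  have ex1: "\<not> (B$i$j > 0 \<and> a$i = 0 \<and> b$j > 0)" for i j
  proof
    assume H: "B$i$j > 0 \<and> a$i = 0 \<and> b$j > 0"
    hence "(\<Sum>j\<in>UNIV. B$i$j * b$j powr ss) = 0" using k(2) by simp
    hence "\<forall>j\<in>UNIV. B$i$j * b$j powr ss = 0" using Bnn a(2)
      by (subst sum_nonneg_eq_0_iff[symmetric]) auto
    hence "B$i$j * b$j powr ss = 0" by blast
    thus False using H by simp
  qed
  have ex2: "\<not> (B$i$j > 0 \<and> b$j = 0 \<and> a$i > 0)" for i j
  proof
    assume H: "B$i$j > 0 \<and> b$j = 0 \<and> a$i > 0"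
    hence "(\<Sum>i\<in>UNIV. B$i$j * a$i powr ss) = 0" using m(2) by simp
    hence "\<forall>i\<in>UNIV. B$i$j * a$i powr ss = 0" using Bnn a(1)
      by (subst sum_nonneg_eq_0_iff[symmetric]) auto
    hence "B$i$j * a$i powr ss = 0" by blast
    thus False using H by simp
  qed
  have main: "\<forall>\<epsilon>>0. \<forall>\<^sub>F t in at_right 0. Psi1 B D ((a,b) + t *\<^sub>R (q - (a,b))) \<le> Psi1 B D (a,b) + ereal (\<epsilon>*t)"
    if q: "q \<in> SimDom" for q
  proof -
    obtain a' b' where qe: "q = (a',b')" by (cases q)
    have ab': "(a',b') \<in> SimDom" using q qe by simp
    have a': "\<forall>i. 0 \<le> a'$i" "\<forall>i. 0 \<le> b'$i" using ab' by (auto simp: SimDom_def)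
    define Gt where "Gt t = GG (a + t *\<^sub>R (a' - a)) (b + t *\<^sub>R (b' - b))" for t
    define DG where "DG = (\<Sum>i\<in>UNIV. \<Sum>j\<in>UNIV. B$i$j * ss * (a$i powr (ss-1) * (a'$i - a$i) * b$j powr ss
            + a$i powr ss * b$j powr (ss-1) * (b'$j - b$j)))"
    have Gte: "Gt = (\<lambda>t. \<Sum>i\<in>UNIV. \<Sum>j\<in>UNIV. B$i$j * (a$i + t*(a'$i - a$i)) powr ss * (b$j + t*(b'$j - b$j)) powr ss)"
      by (simp add: Gt_def GG_def fun_eq_iff)
    have dG: "(Gt has_real_derivative DG) (at_right 0)"
      unfolding Gte DG_def
      by (intro DERIV_sum prod_term_deriv) (use a a' Bnn ss_pos two_ss ex1 ex2 in auto)
    have G0: "Gt 0 = GG a b" by (simp add: Gt_def)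
    have DGn: "DG \<le> 0" unfolding DG_def by (rule DG_nonpos[OF ab ab' k m])
    define f where "f t = real D * ln (Gt t)" for t
    have df: "(f has_real_derivative real D * (DG / Gt 0)) (at_right 0)"
      unfolding f_def using Gp G0 by (auto intro!: derivative_eq_intros dG)
    have "real D * (DG / Gt 0) \<le> 0" using DGn Gp G0 Dpos
      by (simp add: mult_nonneg_nonpos divide_nonpos_pos)
    hence H: "\<forall>\<epsilon>>0. \<forall>\<^sub>F t in at_right 0. f t \<le> f 0 + \<epsilon>*t" using crit_deriv_iff[OF df] by simp
    have evp: "\<forall>\<^sub>F t in at_right 0. Gt t > 0" using deriv_pos_ev[OF dG] G0 Gp by simp
    have ev01: "\<forall>\<^sub>F t::real in at_right 0. 0 < t \<and> t < 1"
      by (rule eventually_at_rightI[of 0 1]) auto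
    show ?thesis
    proof (intro allI impI)
      fix \<epsilon> :: real assume "\<epsilon> > 0"
      from H[rule_format, OF this] evp ev01
      show "\<forall>\<^sub>F t in at_right 0. Psi1 B D ((a,b) + t *\<^sub>R (q - (a,b))) \<le> Psi1 B D (a,b) + ereal (\<epsilon>*t)"
      proof eventually_elim
        case (elim t)
        have pe: "(a,b) + t *\<^sub>R (q - (a,b)) = (a + t *\<^sub>R (a' - a), b + t *\<^sub>R (b' - b))" by (simp add: qe)
        have "(a + t *\<^sub>R (a' - a), b + t *\<^sub>R (b' - b)) \<in> SimDom" using SimDom_path[OF ab ab', of t] elim by auto
        from Psi1_upper[OF this] elim have "Psi1 B D ((a,b) + t *\<^sub>R (q - (a,b))) \<le> ereal (f t)"
          unfolding pe by (simp add: f_def Gt_def)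
        also have "\<dots> \<le> ereal (f 0 + \<epsilon>*t)" using elim by simp
        also have "\<dots> = Psi1 B D (a,b) + ereal (\<epsilon>*t)" using P0 G0 by (simp add: f_def)
        finally show ?case .
      qed
    qed
  qed
  show ?thesis unfolding crit_point_def using ab P0 main by auto
qed

end

lemma xlx_cont: "continuous_on {0..} (\<lambda>y::real. y * ln y)"
  unfolding continuous_on_def
proof
  fix y :: real assume "y \<in> {0..}"
  show "((\<lambda>y. y * ln y) \<longlongrightarrow> y * ln y) (at y within {0..})"
  proof (cases "y = 0")
    case True
    have "((\<lambda>y::real. y * ln y) \<longlongrightarrow> 0) (at_right 0)" by real_asymp
    thus ?thesis using True by (simp add: at_within_Ici_at_right)
  next
    case False
    hence "isCont (\<lambda>y. y * ln y) y" by (auto intro!: continuous_intros)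
    hence "continuous (at y within {0..}) (\<lambda>y. y * ln y)" by (rule continuous_at_imp_continuous_at_within)
    thus ?thesis by (simp add: continuous_within)
  qed
qed

lemma cont_nth2: "continuous_on S (\<lambda>x::real^'n^'m. x$i$j)"
proof -
  have "bounded_linear (\<lambda>x::real^'n^'m. x$i$j)"
    using bounded_linear_compose[OF bounded_linear_vec_nth[of j] bounded_linear_vec_nth[of i]] by (simp add: o_def)
  thus ?thesis by (rule linear_continuous_on)
qed

lemma closed_const_imp: "closed {x. Q x} \<Longrightarrow> closed {x. P \<longrightarrow> Q x}"
  by (cases P) auto

context spin begin

definition oset :: "real^'q \<Rightarrow> real^'q \<Rightarrow> (real^'q^'q) set" where
  "oset a b = {x. (\<forall>i j. 0 \<le> x$i$j) \<and> (\<forall>i. (\<Sum>j\<in>UNIV. x$i$j) = a$i) \<and> (\<forall>j. (\<Sum>i\<in>UNIV. x$i$j) = b$j)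
       \<and> (\<forall>i j. B$i$j = 0 \<longrightarrow> x$i$j = 0)}"

lemma sok_iff:
  assumes "\<forall>i j. 0 \<le> x$i$j"
  shows "sok x \<longleftrightarrow> (\<forall>i j. B$i$j = 0 \<longrightarrow> x$i$j = 0)"
proof
  assume s: "sok x"
  show "\<forall>i j. B$i$j = 0 \<longrightarrow> x$i$j = 0"
  proof (intro allI impI)
    fix i j assume "B$i$j = 0"
    hence "\<not> 0 < x$i$j" using s unfolding sok_def by (metis less_irrefl)
    thus "x$i$j = 0" using assms by (meson antisym not_less)
  qed
next
  assume H: "\<forall>i j. B$i$j = 0 \<longrightarrow> x$i$j = 0"
  show "sok x" unfolding sok_def
  proof (intro allI impI)
    fix i j assume "0 < x$i$j"
    hence "B$i$j \<noteq> 0" using H by auto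
    thus "0 < B$i$j" using Bnn[of i j] by simp
  qed
qed

lemma oset_eq: "oset a b = {x\<in>plans a b. sok x}"
  unfolding oset_def plans_def using sok_iff by auto

lemma oset_compact: "compact (oset a b)"
proof (rule compact_eq_bounded_closed[THEN iffD2], rule conjI)
  show "bounded (oset a b)" unfolding bounded_iff
  proof (intro exI ballI)
    fix x assume x: "x \<in> oset a b"
    have nn: "\<forall>i j. 0 \<le> x$i$j" using x by (simp add: oset_def)
    have "norm x \<le> (\<Sum>i\<in>UNIV. norm (x$i))" unfolding norm_vec_def by (rule L2_set_le_sum) simp
    also have "\<dots> \<le> (\<Sum>i\<in>UNIV. \<Sum>j\<in>UNIV. \<bar>x$i$j\<bar>)" by (intro sum_mono norm_le_l1_cart)
    also have "\<dots> = (\<Sum>i\<in>UNIV. a$i)" using x nn by (simp add: oset_def)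
    finally show "norm x \<le> (\<Sum>i\<in>UNIV. a$i)" .
  qed
  have c1: "closed {x::real^'q^'q. 0 \<le> x$i$j}" for i j
    by (intro closed_Collect_le continuous_on_const cont_nth2)
  have c2: "closed {x::real^'q^'q. (\<Sum>j\<in>UNIV. x$i$j) = a$i}" for i
    by (intro closed_Collect_eq continuous_on_const continuous_on_sum cont_nth2)
  have c3: "closed {x::real^'q^'q. (\<Sum>i\<in>UNIV. x$i$j) = b$j}" for j
    by (intro closed_Collect_eq continuous_on_const continuous_on_sum cont_nth2)
  have c4: "closed {x::real^'q^'q. B$i$j = 0 \<longrightarrow> x$i$j = 0}" for i j
    by (intro closed_const_imp closed_Collect_eq continuous_on_const cont_nth2)
  show "closed (oset a b)" unfolding oset_def
    by (intro closed_Collect_conj closed_Collect_all c1 c2 c3 c4)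
qed

lemma vr_cont: "continuous_on (oset a b) vr"
proof -
  have xc: "continuous_on (oset a b) (\<lambda>x. x$i$j * ln (x$i$j))" for i j
  proof -
    have "(\<lambda>x. x$i$j) ` oset a b \<subseteq> {0..}" by (auto simp: oset_def)
    thus ?thesis using continuous_on_compose2[OF xlx_cont cont_nth2] by blast
  qed
  show ?thesis unfolding vr_def
    by (intro continuous_on_sum continuous_on_diff continuous_on_mult continuous_on_const cont_nth2 xc)
qed

end

context spin begin

lemma exists_opt:
  assumes fin: "Psi1 B D (a,b) \<noteq> -\<infinity>"
  shows "\<exists>x. x \<in> plans a b \<and> sok x \<and> Psi1 B D (a,b) = ereal (AA a b + real D * vr x)"
proof -
  have ne: "oset a b \<noteq> {}"
  proof
    assume E: "oset a b = {}"
    have "val x \<le> -\<infinity>" if "x \<in> plans a b" for x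
    proof -
      have "\<not> sok x" using E that oset_eq by auto
      moreover have "\<forall>i j. 0 \<le> x$i$j" using that by (simp add: plans_def)
      ultimately show ?thesis using val_nsok by simp
    qed
    hence "(SUP x\<in>plans a b. val x) \<le> -\<infinity>" by (rule SUP_least)
    hence "(SUP x\<in>plans a b. val x) = -\<infinity>" by simp
    hence "Psi1 B D (a,b) = -\<infinity>" using Dpos by (simp add: Psi1_eq)
    thus False using fin by simp
  qed
  obtain x where x: "x \<in> oset a b" and mx: "\<forall>y\<in>oset a b. vr y \<le> vr x"
    using continuous_attains_sup[OF oset_compact ne vr_cont] by blast
  have xp: "x \<in> plans a b" and xs: "sok x" using x oset_eq by auto
  have xnn: "\<forall>i j. 0 \<le> x$i$j" using xp by (simp add: plans_def)
  have "(SUP y\<in>plans a b. val y) = ereal (vr x)"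
  proof (rule antisym)
    show "(SUP y\<in>plans a b. val y) \<le> ereal (vr x)"
    proof (rule SUP_least)
      fix y assume y: "y \<in> plans a b"
      have ynn: "\<forall>i j. 0 \<le> y$i$j" using y by (simp add: plans_def)
      show "val y \<le> ereal (vr x)"
      proof (cases "sok y")
        case True
        hence "y \<in> oset a b" using y oset_eq by auto
        thus ?thesis using mx val_sok[OF ynn True] by simp
      next
        case False thus ?thesis using val_nsok[OF ynn] by simp
      qed
    qed
    show "ereal (vr x) \<le> (SUP y\<in>plans a b. val y)"
      using SUP_upper[OF xp, of val] val_sok[OF xnn xs] by simp
  qed
  hence "Psi1 B D (a,b) = ereal (AA a b + real D * vr x)" by (simp add: Psi1_eq)
  thus ?thesis using xp xs by blast
qed

end

definition ent :: "real \<Rightarrow> real \<Rightarrow> real \<Rightarrow> real" where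
  "ent y0 y1 t = (y0 + t*(y1-y0)) * ln (y0 + t*(y1-y0))"
definition smf :: "real \<Rightarrow> real \<Rightarrow> real \<Rightarrow> real" where
  "smf y0 y1 t = (if y0 = 0 then t * (y1 * ln y1) else ent y0 y1 t)"
definition dsm :: "real \<Rightarrow> real \<Rightarrow> real" where
  "dsm y0 y1 = (if y0 = 0 then y1 * ln y1 else (y1 - y0) * (ln y0 + 1))"
definition kap :: "real \<Rightarrow> real \<Rightarrow> real" where
  "kap y0 y1 = (if y0 = 0 then y1 else 0)"

lemma smf_deriv:
  assumes "0 \<le> y0"
  shows "(smf y0 y1 has_real_derivative dsm y0 y1) (at_right 0)"
proof (cases "y0 = 0")
  case True
  have "((\<lambda>t. t * (y1 * ln y1)) has_real_derivative 1 * (y1 * ln y1)) (at_right 0)"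
    by (intro derivative_eq_intros) auto
  moreover have "smf y0 y1 = (\<lambda>t. t * (y1 * ln y1))" using True by (simp add: smf_def fun_eq_iff)
  ultimately show ?thesis using True by (simp add: dsm_def)
next
  case False
  hence p: "y0 > 0" using assms by simp
  have "((\<lambda>t. (y0 + t*(y1-y0)) * ln (y0 + t*(y1-y0))) has_real_derivative
      (0 + (0*(y1-y0) + 1*(y1-y0))) * ln (y0 + 0*(y1-y0)) + (y0 + 0*(y1-y0)) * ((0 + (0*(y1-y0) + 1*(y1-y0))) / (y0 + 0*(y1-y0)))) (at 0)"
    using p by (intro derivative_eq_intros) auto
  hence "((\<lambda>t. (y0 + t*(y1-y0)) * ln (y0 + t*(y1-y0))) has_real_derivative (y1 - y0) * (ln y0 + 1)) (at 0)"
    by (rule DERIV_cong) (use p in \<open>simp add: field_simps\<close>)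
  hence "((\<lambda>t. (y0 + t*(y1-y0)) * ln (y0 + t*(y1-y0))) has_real_derivative (y1 - y0) * (ln y0 + 1)) (at_right 0)"
    by (rule has_field_derivative_at_within)
  moreover have "smf y0 y1 = (\<lambda>t. (y0 + t*(y1-y0)) * ln (y0 + t*(y1-y0)))" using False by (simp add: smf_def ent_def fun_eq_iff)
  ultimately show ?thesis using False by (simp add: dsm_def)
qed

lemma ent_dec:
  assumes "0 \<le> y0" "0 \<le> y1" "0 < t"
  shows "ent y0 y1 t = smf y0 y1 t + kap y0 y1 * (t * ln t)"
proof (cases "y0 = 0")
  case True
  show ?thesis
  proof (cases "y1 = 0")
    case False
    hence "y1 > 0" using assms by simp
    thus ?thesis using True assms by (simp add: ent_def smf_def kap_def ln_mult algebra_simps)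
  qed (use True in \<open>simp add: ent_def smf_def kap_def\<close>)
qed (simp add: smf_def kap_def)

lemma smf0: "smf y0 y1 0 = ent y0 y1 0"
  by (simp add: smf_def ent_def)

lemma sum_delta1:
  assumes "\<forall>k. f k 0 = 0"
  shows "(\<Sum>k\<in>(UNIV::'n::finite set). f k (if k = i then 1 else 0)) = f i 1"
proof -
  have "(\<Sum>k\<in>UNIV. f k (if k = i then 1 else 0)) = (\<Sum>k\<in>UNIV. if k = i then f i 1 else 0)"
    by (intro sum.cong refl) (simp add: assms)
  thus ?thesis by simp
qed

lemma sum_delta2:
  assumes "\<forall>k l. f k l 0 = 0"
  shows "(\<Sum>k\<in>(UNIV::'n::finite set). \<Sum>l\<in>(UNIV::'m::finite set). f k l (if k = i \<and> l = j then 1 else 0)) = f i j 1"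
proof -
  have "(\<Sum>k\<in>UNIV. \<Sum>l\<in>UNIV. f k l (if k = i \<and> l = j then 1 else 0)) = (\<Sum>k\<in>(UNIV::'n set). if k = i then f i j 1 else 0)"
  proof (intro sum.cong refl)
    fix k show "(\<Sum>l\<in>(UNIV::'m set). f k l (if k = i \<and> l = j then 1 else 0)) = (if k = i then f i j 1 else 0)"
    proof (cases "k = i")
      case True
      thus ?thesis using sum_delta1[of "f k" j] assms by simp
    qed (simp add: assms)
  qed
  thus ?thesis by simp
qed

context spin begin

lemma plans_path:
  fixes xo x' :: "real^'q^'q"
  assumes "xo \<in> plans a b" "x' \<in> plans a' b'" "0 \<le> t" "t \<le> 1"
  shows "xo + t *\<^sub>R (x' - xo) \<in> plans (a + t *\<^sub>R (a' - a)) (b + t *\<^sub>R (b' - b))"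
proof -
  have e: "(xo + t *\<^sub>R (x' - xo))$i$j = (1-t) * xo$i$j + t * x'$i$j" for i j by (simp add: algebra_simps)
  have nn: "0 \<le> (xo + t *\<^sub>R (x' - xo))$i$j" for i j
    unfolding e using assms by (intro add_nonneg_nonneg mult_nonneg_nonneg) (auto simp: plans_def)
  have r: "(\<Sum>j\<in>UNIV. (xo + t *\<^sub>R (x' - xo))$i$j) = (a + t *\<^sub>R (a' - a))$i" for i
    using assms(1,2) unfolding plans_def
    by (simp add: sum.distrib sum_distrib_left[symmetric] sum_subtractf)
  have c: "(\<Sum>i\<in>UNIV. (xo + t *\<^sub>R (x' - xo))$i$j) = (b + t *\<^sub>R (b' - b))$j" for j
    using assms(1,2) unfolding plans_def
    by (simp add: sum.distrib sum_distrib_left[symmetric] sum_subtractf)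
  show ?thesis unfolding plans_def using nn r c by blast
qed

lemma sok_path:
  fixes xo x' :: "real^'q^'q"
  assumes "xo \<in> plans a b" "x' \<in> plans a' b'" "sok xo" "sok x'" "0 \<le> t" "t \<le> 1"
  shows "sok (xo + t *\<^sub>R (x' - xo))"
  unfolding sok_def
proof (intro allI impI)
  fix i j assume p: "0 < (xo + t *\<^sub>R (x' - xo))$i$j"
  have e: "(xo + t *\<^sub>R (x' - xo))$i$j = (1-t) * xo$i$j + t * x'$i$j" by (simp add: algebra_simps)
  have "0 < xo$i$j \<or> 0 < x'$i$j"
  proof (rule ccontr)
    assume "\<not> (0 < xo$i$j \<or> 0 < x'$i$j)"
    hence "xo$i$j \<le> 0" "x'$i$j \<le> 0" by auto
    hence "(1-t) * xo$i$j + t * x'$i$j \<le> 0" using assms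
      by (intro add_nonpos_nonpos mult_nonneg_nonpos) auto
    thus False using p e by simp
  qed
  thus "0 < B$i$j" using assms(3,4) by (auto simp: sok_def)
qed

lemma key_dir:
  fixes a b a' b' :: "real^'q" and xo x' :: "real^'q^'q"
  assumes ab: "(a,b) \<in> SimDom" and cr: "crit_point (Psi1 B D) SimDom (a,b)"
    and xo: "xo \<in> plans a b" "sok xo" "Psi1 B D (a,b) = ereal (AA a b + real D * vr xo)"
    and ab': "(a',b') \<in> SimDom" and x': "x' \<in> plans a' b'" "sok x'"
  shows "(real D - 1) * ((\<Sum>i\<in>UNIV. kap (a$i) (a'$i)) + (\<Sum>j\<in>UNIV. kap (b$j) (b'$j)))
           - real D * (\<Sum>i\<in>UNIV. \<Sum>j\<in>UNIV. kap (xo$i$j) (x'$i$j)) \<ge> 0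
       \<and> ((real D - 1) * ((\<Sum>i\<in>UNIV. kap (a$i) (a'$i)) + (\<Sum>j\<in>UNIV. kap (b$j) (b'$j)))
           - real D * (\<Sum>i\<in>UNIV. \<Sum>j\<in>UNIV. kap (xo$i$j) (x'$i$j)) = 0 \<longrightarrow>
          (real D - 1) * ((\<Sum>i\<in>UNIV. dsm (a$i) (a'$i)) + (\<Sum>j\<in>UNIV. dsm (b$j) (b'$j)))
           + real D * (\<Sum>i\<in>UNIV. \<Sum>j\<in>UNIV. ((x'$i$j - xo$i$j) * ln (B$i$j) - dsm (xo$i$j) (x'$i$j))) \<le> 0)"
    (is "?K \<ge> 0 \<and> (?K = 0 \<longrightarrow> ?Dg \<le> 0)")
proof -
  have a0: "\<forall>i. 0 \<le> a$i" "\<forall>j. 0 \<le> b$j" using ab by (auto simp: SimDom_def)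
  have a0': "\<forall>i. 0 \<le> a'$i" "\<forall>j. 0 \<le> b'$j" using ab' by (auto simp: SimDom_def)
  have xn: "\<forall>i j. 0 \<le> xo$i$j" using xo by (simp add: plans_def)
  have xn': "\<forall>i j. 0 \<le> x'$i$j" using x' by (simp add: plans_def)
  define h where "h t = AA (a + t *\<^sub>R (a' - a)) (b + t *\<^sub>R (b' - b)) + real D * vr (xo + t *\<^sub>R (x' - xo))" for t
  define g where "g t = (real D - 1) * ((\<Sum>i\<in>UNIV. smf (a$i) (a'$i) t) + (\<Sum>j\<in>UNIV. smf (b$j) (b'$j) t))
      + real D * (\<Sum>i\<in>UNIV. \<Sum>j\<in>UNIV. ((xo$i$j + t * (x'$i$j - xo$i$j)) * ln (B$i$j) - smf (xo$i$j) (x'$i$j) t))" for t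
  have hent: "h t = (real D - 1) * ((\<Sum>i\<in>UNIV. ent (a$i) (a'$i) t) + (\<Sum>j\<in>UNIV. ent (b$j) (b'$j) t))
      + real D * (\<Sum>i\<in>UNIV. \<Sum>j\<in>UNIV. ((xo$i$j + t * (x'$i$j - xo$i$j)) * ln (B$i$j) - ent (xo$i$j) (x'$i$j) t))" for t
    by (simp add: h_def AA_def vr_def ent_def)
  have dg: "(g has_real_derivative ?Dg) (at_right 0)"
    unfolding g_def
    by (intro derivative_intros DERIV_sum smf_deriv) (auto intro!: derivative_eq_intros smf_deriv simp: a0 xn)
  have hg: "\<forall>\<^sub>F t in at_right 0. h t = g t + ?K * (t * ln t)"
  proof (rule eventually_mono[OF eventually_at_right_less])
    fix t :: real assume t: "0 < t"
    have e1: "(\<Sum>i\<in>UNIV. ent (a$i) (a'$i) t) = (\<Sum>i\<in>UNIV. smf (a$i) (a'$i) t) + (\<Sum>i\<in>UNIV. kap (a$i) (a'$i)) * (t * ln t)"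
      using a0 a0' t by (simp add: ent_dec sum.distrib sum_distrib_right)
    have e2: "(\<Sum>i\<in>UNIV. ent (b$i) (b'$i) t) = (\<Sum>i\<in>UNIV. smf (b$i) (b'$i) t) + (\<Sum>i\<in>UNIV. kap (b$i) (b'$i)) * (t * ln t)"
      using a0 a0' t by (simp add: ent_dec sum.distrib sum_distrib_right)
    have e3: "(\<Sum>i\<in>UNIV. \<Sum>j\<in>UNIV. ((xo$i$j + t * (x'$i$j - xo$i$j)) * ln (B$i$j) - ent (xo$i$j) (x'$i$j) t))
      = (\<Sum>i\<in>UNIV. \<Sum>j\<in>UNIV. ((xo$i$j + t * (x'$i$j - xo$i$j)) * ln (B$i$j) - smf (xo$i$j) (x'$i$j) t))
        - (\<Sum>i\<in>UNIV. \<Sum>j\<in>UNIV. kap (xo$i$j) (x'$i$j)) * (t * ln t)"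
      using xn xn' t by (simp add: ent_dec sum.distrib sum_distrib_right sum_distrib_left sum_subtractf algebra_simps)
    show "h t = g t + ?K * (t * ln t)"
      unfolding hent e1 e2 e3 g_def by (simp add: algebra_simps)
  qed
  have h0: "h 0 = g 0" unfolding hent g_def by (simp add: smf0)
  have H: "\<forall>\<epsilon>>0. \<forall>\<^sub>F t in at_right 0. h t \<le> h 0 + \<epsilon>*t"
  proof (intro allI impI)
    fix \<epsilon> :: real assume ep: "\<epsilon> > 0"
    have "\<forall>\<epsilon>>0. \<forall>\<^sub>F t in at_right 0. Psi1 B D ((a,b) + t *\<^sub>R ((a',b') - (a,b))) \<le> Psi1 B D (a,b) + ereal (\<epsilon>*t)"
      using cr ab' unfolding crit_point_def by blast
    hence ev: "\<forall>\<^sub>F t in at_right 0. Psi1 B D ((a,b) + t *\<^sub>R ((a',b') - (a,b))) \<le> Psi1 B D (a,b) + ereal (\<epsilon>*t)"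
      using ep by blast
    have ev01: "\<forall>\<^sub>F t::real in at_right 0. 0 < t \<and> t < 1"
      by (rule eventually_at_rightI[of 0 1]) auto
    from ev ev01 show "\<forall>\<^sub>F t in at_right 0. h t \<le> h 0 + \<epsilon>*t"
    proof eventually_elim
      case (elim t)
      have pe: "(a,b) + t *\<^sub>R ((a',b') - (a,b)) = (a + t *\<^sub>R (a' - a), b + t *\<^sub>R (b' - b))" by simp
      have "ereal (h t) \<le> Psi1 B D ((a,b) + t *\<^sub>R ((a',b') - (a,b)))"
        unfolding pe h_def using elim
        by (intro Psi1_lower plans_path[OF xo(1) x'(1)] sok_path[OF xo(1) x'(1) xo(2) x'(2)]) auto
      also have "\<dots> \<le> Psi1 B D (a,b) + ereal (\<epsilon>*t)" using elim by simp
      also have "\<dots> = ereal (h 0 + \<epsilon>*t)" using xo(3) by (simp add: h_def)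
      finally show ?case by simp
    qed
  qed
  show ?thesis by (rule sing_contra[OF dg hg h0 H])
qed

end

definition Emat :: "'n \<Rightarrow> 'm \<Rightarrow> real^'m^'n" where
  "Emat i j = (\<chi> k l. if k = i \<and> l = j then 1 else 0)"

lemma Emat_nth: "Emat i j $ k $ l = (if k = i \<and> l = j then 1 else 0)"
  by (simp add: Emat_def)

lemma axis_nth1: "(axis i (1::real) :: real^'n) $ k = (if k = i then 1 else 0)"
  by (simp add: axis_def)

lemma dsm_sum1:
  fixes v :: "'n::finite \<Rightarrow> real"
  assumes nn: "\<forall>k. 0 \<le> v k" and s1: "(\<Sum>k\<in>UNIV. v k) = 1" and vi: "v i > 0"
  shows "(\<Sum>k\<in>UNIV. dsm (v k) (if k = i then 1 else 0)) = ln (v i) - (\<Sum>k\<in>UNIV. v k * ln (v k))"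
proof -
  have tm: "dsm (v k) (if k = i then 1 else 0) = (if k = i then 1 else 0) * (ln (v k) + 1) - v k * ln (v k) - v k" for k
  proof (cases "v k = 0")
    case True
    hence "k \<noteq> i" using vi by auto
    thus ?thesis using True by (simp add: dsm_def)
  next
    case False thus ?thesis by (simp add: dsm_def algebra_simps)
  qed
  have "(\<Sum>k\<in>UNIV. (if k = i then 1 else 0) * (ln (v k) + 1)) = ln (v i) + 1"
    using sum_delta1[of "\<lambda>k y. y * (ln (v k) + 1)" i] by simp
  thus ?thesis unfolding tm using s1 by (simp add: sum_subtractf)
qed

lemma dsm_sum2:
  fixes v :: "'n::finite \<Rightarrow> 'm::finite \<Rightarrow> real"
  assumes nn: "\<forall>k l. 0 \<le> v k l" and s1: "(\<Sum>k\<in>UNIV. \<Sum>l\<in>UNIV. v k l) = 1" and vi: "v i j > 0"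
  shows "(\<Sum>k\<in>UNIV. \<Sum>l\<in>UNIV. dsm (v k l) (if k = i \<and> l = j then 1 else 0))
        = ln (v i j) - (\<Sum>k\<in>UNIV. \<Sum>l\<in>UNIV. v k l * ln (v k l))"
proof -
  have tm: "dsm (v k l) (if k = i \<and> l = j then 1 else 0) = (if k = i \<and> l = j then 1 else 0) * (ln (v k l) + 1) - v k l * ln (v k l) - v k l" for k l
  proof (cases "v k l = 0")
    case True
    hence "\<not> (k = i \<and> l = j)" using vi by auto
    thus ?thesis using True by (simp add: dsm_def)
  next
    case False thus ?thesis by (simp add: dsm_def algebra_simps)
  qed
  have "(\<Sum>k\<in>UNIV. \<Sum>l\<in>UNIV. (if k = i \<and> l = j then 1 else 0) * (ln (v k l) + 1)) = ln (v i j) + 1"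
    using sum_delta2[of "\<lambda>k l y. y * (ln (v k l) + 1)" i j] by simp
  thus ?thesis unfolding tm using s1 by (simp add: sum_subtractf)
qed

context spin begin

lemma Emat_plans: "Emat i j \<in> plans (axis i 1) (axis j 1)"
proof -
  have r: "(\<Sum>l\<in>UNIV. Emat i j $ k $ l) = axis i 1 $ k" for k
    by (cases "k = i") (simp_all add: Emat_nth axis_nth1)
  have c: "(\<Sum>k\<in>UNIV. Emat i j $ k $ l) = axis j 1 $ l" for l
    by (cases "l = j") (simp_all add: Emat_nth axis_nth1)
  show ?thesis unfolding plans_def using r c by (simp add: Emat_nth)
qed

lemma axis_SimDom: "(axis i 1, axis j 1) \<in> SimDom"
  unfolding SimDom_def by (simp add: axis_nth1)

lemma Emat_sok: "B$i$j > 0 \<Longrightarrow> sok (Emat i j)"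
  unfolding sok_def Emat_nth by auto

end

context spin begin

lemma crit_Psi1_fpc:
  fixes a b :: "real^'q"
  assumes ab: "(a,b) \<in> SimDom" and cr: "crit_point (Psi1 B D) SimDom (a,b)"
  shows "fpc (rt a) (rt b)"
proof -
  have a0: "\<forall>i. 0 \<le> a$i" and a1: "(\<Sum>i\<in>UNIV. a$i) = 1" and b0: "\<forall>j. 0 \<le> b$j" and b1: "(\<Sum>j\<in>UNIV. b$j) = 1"
    using ab by (auto simp: SimDom_def)
  have fin: "Psi1 B D (a,b) \<noteq> -\<infinity>" using cr by (simp add: crit_point_def)
  obtain xo where xo: "xo \<in> plans a b" "sok xo" "Psi1 B D (a,b) = ereal (AA a b + real D * vr xo)"
    using exists_opt[OF fin] by blast
  have xn: "\<forall>i j. 0 \<le> xo$i$j" using xo by (simp add: plans_def)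
  have xs1: "(\<Sum>i\<in>UNIV. \<Sum>j\<in>UNIV. xo$i$j) = 1" using xo(1) a1 by (simp add: plans_def)
  define M where "M = AA a b + real D * vr xo"
  have kd: "\<And>i j. B$i$j > 0 \<Longrightarrow>
      (real D - 1) * ((\<Sum>k\<in>UNIV. kap (a$k) (axis i 1 $ k)) + (\<Sum>l\<in>UNIV. kap (b$l) (axis j 1 $ l)))
           - real D * (\<Sum>k\<in>UNIV. \<Sum>l\<in>UNIV. kap (xo$k$l) (Emat i j $ k $ l)) \<ge> 0
       \<and> ((real D - 1) * ((\<Sum>k\<in>UNIV. kap (a$k) (axis i 1 $ k)) + (\<Sum>l\<in>UNIV. kap (b$l) (axis j 1 $ l)))
           - real D * (\<Sum>k\<in>UNIV. \<Sum>l\<in>UNIV. kap (xo$k$l) (Emat i j $ k $ l)) = 0 \<longrightarrow>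
          (real D - 1) * ((\<Sum>k\<in>UNIV. dsm (a$k) (axis i 1 $ k)) + (\<Sum>l\<in>UNIV. dsm (b$l) (axis j 1 $ l)))
           + real D * (\<Sum>k\<in>UNIV. \<Sum>l\<in>UNIV. ((Emat i j $ k $ l - xo$k$l) * ln (B$k$l) - dsm (xo$k$l) (Emat i j $ k $ l))) \<le> 0)"
    by (rule key_dir[OF ab cr xo axis_SimDom Emat_plans Emat_sok])
  have kz: "kap y 0 = 0" for y by (simp add: kap_def)
  have kd2: "\<And>i j. B$i$j > 0 \<Longrightarrow>
      (real D - 1) * (kap (a$i) 1 + kap (b$j) 1) - real D * kap (xo$i$j) 1 \<ge> 0
       \<and> ((real D - 1) * (kap (a$i) 1 + kap (b$j) 1) - real D * kap (xo$i$j) 1 = 0 \<longrightarrow>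
          (real D - 1) * ((\<Sum>k\<in>UNIV. dsm (a$k) (axis i 1 $ k)) + (\<Sum>l\<in>UNIV. dsm (b$l) (axis j 1 $ l)))
           + real D * (\<Sum>k\<in>UNIV. \<Sum>l\<in>UNIV. ((Emat i j $ k $ l - xo$k$l) * ln (B$k$l) - dsm (xo$k$l) (Emat i j $ k $ l))) \<le> 0)"
  proof -
    fix i j assume "B$i$j > 0"
    note k = kd[OF this]
    have s1: "(\<Sum>k\<in>UNIV. kap (a$k) (axis i 1 $ k)) = kap (a$i) 1"
      unfolding axis_nth1 using sum_delta1[of "\<lambda>k y. kap (a$k) y" i] kz by simp
    have s2: "(\<Sum>k\<in>UNIV. kap (b$k) (axis j 1 $ k)) = kap (b$j) 1"
      unfolding axis_nth1 using sum_delta1[of "\<lambda>k y. kap (b$k) y" j] kz by simp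
    have s3: "(\<Sum>k\<in>UNIV. \<Sum>l\<in>UNIV. kap (xo$k$l) (Emat i j $ k $ l)) = kap (xo$i$j) 1"
      unfolding Emat_nth using sum_delta2[of "\<lambda>k l y. kap (xo$k$l) y" i j] kz by simp
    show "?thesis i j" using k unfolding s1 s2 s3 .
  qed
  have stepA: "xo$i$j > 0" if "B$i$j > 0" "a$i > 0" "b$j > 0" for i j
  proof (rule ccontr)
    assume "\<not> xo$i$j > 0"
    hence "xo$i$j = 0" using xn by (meson antisym not_less)
    thus False using kd2[OF that(1)] that Dpos by (simp add: kap_def)
  qed
  have stepB: "b$j = 0" if "B$i$j > 0" "a$i = 0" for i j
  proof (rule ccontr)
    assume nb: "b$j \<noteq> 0"
    have "xo$i$j = 0" using plan_entry_le[OF xo(1), of i j] that xn[rule_format, of i j] by simp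
    thus False using kd2[OF that(1)] that nb by (simp add: kap_def)
  qed
  have stepC: "a$i = 0" if "B$i$j > 0" "b$j = 0" for i j
  proof (rule ccontr)
    assume na: "a$i \<noteq> 0"
    have "xo$i$j = 0" using plan_entry_le[OF xo(1), of i j] that xn[rule_format, of i j] by simp
    thus False using kd2[OF that(1)] that na by (simp add: kap_def)
  qed
  have Meq: "M = real D * (\<Sum>i\<in>UNIV. \<Sum>j\<in>UNIV. xo$i$j * ln (yy a b i j / xo$i$j))"
    unfolding M_def by (rule W_eq[OF xo(1,2)])
  have pos: "B$i$j > 0 \<and> a$i > 0 \<and> b$j > 0" if "xo$i$j > 0" for i j
  proof -
    have "B$i$j > 0" using xo(2) that by (simp add: sok_def)
    moreover have "a$i > 0" "b$j > 0" using plan_entry_le[OF xo(1), of i j] that by auto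
    ultimately show ?thesis by simp
  qed
  have stepD: "real D * ln (yy a b i j / xo$i$j) \<le> M" if xp: "xo$i$j > 0" for i j
  proof -
    from pos[OF xp] have Bp: "B$i$j > 0" and ap: "a$i > 0" and bp: "b$j > 0" by auto
    have K0: "(real D - 1) * (kap (a$i) 1 + kap (b$j) 1) - real D * kap (xo$i$j) 1 = 0"
      using ap bp xp by (simp add: kap_def)
    have Dg: "(real D - 1) * ((\<Sum>k\<in>UNIV. dsm (a$k) (axis i 1 $ k)) + (\<Sum>l\<in>UNIV. dsm (b$l) (axis j 1 $ l)))
           + real D * (\<Sum>k\<in>UNIV. \<Sum>l\<in>UNIV. ((Emat i j $ k $ l - xo$k$l) * ln (B$k$l) - dsm (xo$k$l) (Emat i j $ k $ l))) \<le> 0"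
      using kd2[OF Bp] K0 by simp
    have d1: "(\<Sum>k\<in>UNIV. dsm (a$k) (axis i 1 $ k)) = ln (a$i) - (\<Sum>k\<in>UNIV. a$k * ln (a$k))"
      unfolding axis_nth1 using dsm_sum1[of "\<lambda>k. a$k" i] a0 a1 ap by simp
    have d2: "(\<Sum>k\<in>UNIV. dsm (b$k) (axis j 1 $ k)) = ln (b$j) - (\<Sum>k\<in>UNIV. b$k * ln (b$k))"
      unfolding axis_nth1 using dsm_sum1[of "\<lambda>k. b$k" j] b0 b1 bp by simp
    have d3: "(\<Sum>k\<in>UNIV. \<Sum>l\<in>UNIV. dsm (xo$k$l) (Emat i j $ k $ l)) = ln (xo$i$j) - (\<Sum>k\<in>UNIV. \<Sum>l\<in>UNIV. xo$k$l * ln (xo$k$l))"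
      unfolding Emat_nth using dsm_sum2[of "\<lambda>k l. xo$k$l" i j] xn xs1 xp by simp
    have d4: "(\<Sum>k\<in>UNIV. \<Sum>l\<in>UNIV. Emat i j $ k $ l * ln (B$k$l)) = ln (B$i$j)"
      unfolding Emat_nth using sum_delta2[of "\<lambda>k l y. y * ln (B$k$l)" i j] by simp
    have d5: "(\<Sum>k\<in>UNIV. \<Sum>l\<in>UNIV. ((Emat i j $ k $ l - xo$k$l) * ln (B$k$l) - dsm (xo$k$l) (Emat i j $ k $ l)))
       = (\<Sum>k\<in>UNIV. \<Sum>l\<in>UNIV. Emat i j $ k $ l * ln (B$k$l)) - (\<Sum>k\<in>UNIV. \<Sum>l\<in>UNIV. xo$k$l * ln (B$k$l))
         - (\<Sum>k\<in>UNIV. \<Sum>l\<in>UNIV. dsm (xo$k$l) (Emat i j $ k $ l))"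
      by (simp add: sum_subtractf left_diff_distrib)
    have vre: "vr xo = (\<Sum>k\<in>UNIV. \<Sum>l\<in>UNIV. xo$k$l * ln (B$k$l)) - (\<Sum>k\<in>UNIV. \<Sum>l\<in>UNIV. xo$k$l * ln (xo$k$l))"
      by (simp add: vr_def sum_subtractf)
    have lny: "ln (yy a b i j / xo$i$j) = ln (B$i$j) + ss * ln (a$i) + ss * ln (b$j) - ln (xo$i$j)"
      using xp Bp ap bp by (simp add: yy_def ln_div ln_mult)
    have "real D * ln (yy a b i j / xo$i$j) - M =
        (real D - 1) * ((\<Sum>k\<in>UNIV. dsm (a$k) (axis i 1 $ k)) + (\<Sum>l\<in>UNIV. dsm (b$l) (axis j 1 $ l)))
           + real D * (\<Sum>k\<in>UNIV. \<Sum>l\<in>UNIV. ((Emat i j $ k $ l - xo$k$l) * ln (B$k$l) - dsm (xo$k$l) (Emat i j $ k $ l)))"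
      unfolding d1 d2 d5 d3 d4 M_def vre AA_def lny Dm1 by (simp add: algebra_simps)
    thus ?thesis using Dg by simp
  qed
  have stepE: "real D * ln (yy a b i j / xo$i$j) = M" if xp: "xo$i$j > 0" for i j
  proof -
    define f where "f k l = xo$k$l * (M - real D * ln (yy a b k l / xo$k$l))" for k l
    have fnn: "0 \<le> f k l" for k l
    proof (cases "xo$k$l > 0")
      case True thus ?thesis using stepD[OF True] by (simp add: f_def)
    next
      case False hence "xo$k$l = 0" using xn by (meson antisym not_less)
      thus ?thesis by (simp add: f_def)
    qed
    have "(\<Sum>k\<in>UNIV. \<Sum>l\<in>UNIV. f k l) = M * (\<Sum>k\<in>UNIV. \<Sum>l\<in>UNIV. xo$k$l)
        - real D * (\<Sum>i\<in>UNIV. \<Sum>j\<in>UNIV. xo$i$j * ln (yy a b i j / xo$i$j))"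
      unfolding f_def by (simp add: right_diff_distrib sum_subtractf sum_distrib_left ac_simps)
    hence s0: "(\<Sum>k\<in>UNIV. \<Sum>l\<in>UNIV. f k l) = 0" using xs1 Meq by simp
    have "(\<Sum>l\<in>UNIV. f i l) = 0"
      using s0 fnn by (subst (asm) sum_nonneg_eq_0_iff) (auto intro: sum_nonneg)
    hence "f i j = 0" using fnn by (subst (asm) sum_nonneg_eq_0_iff) auto
    thus ?thesis using xp by (simp add: f_def)
  qed
  define cc where "cc = exp (- M / real D)"
  have ccp: "cc > 0" by (simp add: cc_def)
  have stepF: "xo$i$j = cc * yy a b i j" for i j
  proof (cases "xo$i$j > 0")
    case True
    from pos[OF True] have "yy a b i j > 0" by (simp add: yy_def)
    have "ln (yy a b i j / xo$i$j) = M / real D" using stepE[OF True] Dpos by (simp add: field_simps)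
    hence "yy a b i j / xo$i$j = exp (M / real D)" using \<open>yy a b i j > 0\<close> True
      by (metis divide_pos_pos exp_ln)
    thus ?thesis using True by (simp add: cc_def field_simps exp_minus)
  next
    case False
    hence x0: "xo$i$j = 0" using xn by (meson antisym not_less)
    have "yy a b i j = 0"
    proof (rule ccontr)
      assume "yy a b i j \<noteq> 0"
      hence "B$i$j \<noteq> 0" "a$i \<noteq> 0" "b$j \<noteq> 0" by (auto simp: yy_def)
      hence "B$i$j > 0" "a$i > 0" "b$j > 0" using Bnn[of i j] a0 b0 by (auto simp: order_le_neq_trans)
      thus False using stepA x0 by fastforce
    qed
    thus ?thesis using x0 by simp
  qed
  have rowsum: "(\<Sum>j\<in>UNIV. B$i$j * b$j powr ss) = (1/cc) * a$i powr (1 - ss)" for i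
  proof (cases "a$i = 0")
    case True
    have Z: "B$i$j * b$j powr ss = 0" for j
    proof (cases "B$i$j > 0")
      case True thus ?thesis using stepB[OF True] \<open>a$i = 0\<close> by simp
    next
      case False hence "B$i$j = 0" using Bnn[of i j] by simp
      thus ?thesis by simp
    qed
    have "(\<Sum>j\<in>UNIV. B$i$j * b$j powr ss) = 0" by (rule sum.neutral) (use Z in auto)
    thus ?thesis using True by simp
  next
    case False
    hence ap: "a$i > 0" using a0 by (simp add: order_le_neq_trans)
    have "a$i = (\<Sum>j\<in>UNIV. xo$i$j)" using xo(1) by (simp add: plans_def)
    also have "\<dots> = cc * a$i powr ss * (\<Sum>j\<in>UNIV. B$i$j * b$j powr ss)"
      by (simp add: stepF yy_def sum_distrib_left ac_simps)
    finally have "(\<Sum>j\<in>UNIV. B$i$j * b$j powr ss) = a$i / (cc * a$i powr ss)" using ap ccp by (simp add: field_simps)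
    also have "\<dots> = (1/cc) * a$i powr (1 - ss)" using ap ccp by (simp add: powr_diff)
    finally show ?thesis .
  qed
  have colsum: "(\<Sum>i\<in>UNIV. B$i$j * a$i powr ss) = (1/cc) * b$j powr (1 - ss)" for j
  proof (cases "b$j = 0")
    case True
    have Z: "B$i$j * a$i powr ss = 0" for i
    proof (cases "B$i$j > 0")
      case True thus ?thesis using stepC[OF True] \<open>b$j = 0\<close> by simp
    next
      case False hence "B$i$j = 0" using Bnn[of i j] by simp
      thus ?thesis by simp
    qed
    have "(\<Sum>i\<in>UNIV. B$i$j * a$i powr ss) = 0" by (rule sum.neutral) (use Z in auto)
    thus ?thesis using True by simp
  next
    case False
    hence bp: "b$j > 0" using b0 by (simp add: order_le_neq_trans)
    have "b$j = (\<Sum>i\<in>UNIV. xo$i$j)" using xo(1) by (simp add: plans_def)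
    also have "\<dots> = cc * b$j powr ss * (\<Sum>i\<in>UNIV. B$i$j * a$i powr ss)"
      by (simp add: stepF yy_def sum_distrib_left ac_simps)
    finally have "(\<Sum>i\<in>UNIV. B$i$j * a$i powr ss) = b$j / (cc * b$j powr ss)" using bp ccp by (simp add: field_simps)
    also have "\<dots> = (1/cc) * b$j powr (1 - ss)" using bp ccp by (simp add: powr_diff)
    finally show ?thesis .
  qed
  have "\<forall>i. Bc (rt b) i = (1/cc) * (rt a)$i powr (pp-1)"
    using rowsum by (simp add: Bc_def rt_def powr_powr ss_pm1)
  moreover have "\<forall>j. Br (rt a) j = (1/cc) * (rt b)$j powr (pp-1)"
    using colsum by (simp add: Br_def rt_def powr_powr ss_pm1)
  moreover have "1/cc > 0" using ccp by simp
  ultimately show ?thesis unfolding fpc_def by blast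
qed

end

lemma localmax_crit:
  fixes f :: "'a::real_normed_vector \<Rightarrow> ereal"
  assumes lm: "local_max f K p" and ninf: "f p \<noteq> \<infinity>"
    and cv: "\<And>q t. q \<in> K \<Longrightarrow> 0 \<le> t \<Longrightarrow> t \<le> 1 \<Longrightarrow> p + t *\<^sub>R (q - p) \<in> K"
  shows "crit_point f K p"
proof -
  obtain e where e: "e > 0" "\<forall>p'\<in>K. dist p' p < e \<longrightarrow> f p' \<le> f p" and pK: "p \<in> K" and fm: "f p \<noteq> -\<infinity>"
    using lm unfolding local_max_def by blast
  have "\<forall>\<^sub>F t in at_right 0. f (p + t *\<^sub>R (q - p)) \<le> f p + ereal (\<epsilon>*t)" if q: "q \<in> K" and ep: "\<epsilon> > 0" for q \<epsilon>
  proof -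
    define d where "d = min 1 (e / (norm (q - p) + 1))"
    have "norm (q - p) + 1 > 0" by (simp add: add_nonneg_pos)
    hence dp: "d > 0" using e by (simp add: d_def)
    show ?thesis
    proof (rule eventually_at_rightI[OF _ dp])
      fix t assume t: "t \<in> {0<..<d}"
      hence t1: "0 \<le> t" "t \<le> 1" by (auto simp: d_def)
      have "t * norm (q - p) \<le> t * (norm (q - p) + 1)" using t1 by (simp add: mult_left_mono)
      also have "\<dots> < e"
      proof -
        have np: "norm (q - p) + 1 > 0" by (simp add: add_nonneg_pos)
        have "t < e / (norm (q - p) + 1)" using t by (simp add: d_def)
        thus ?thesis using np by (simp add: pos_less_divide_eq)
      qed
      finally have "dist (p + t *\<^sub>R (q - p)) p < e" using t1 by (simp add: dist_norm)
      hence "f (p + t *\<^sub>R (q - p)) \<le> f p" using e cv[OF q t1] by blast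
      also have "f p \<le> f p + ereal (\<epsilon>*t)" using ep t1 by (simp add: add_increasing2)
      finally show "f (p + t *\<^sub>R (q - p)) \<le> f p + ereal (\<epsilon>*t)" .
    qed
  qed
  thus ?thesis unfolding crit_point_def using pK fm ninf by blast
qed

context spin begin

lemma fpc_pos:
  fixes r c :: "real^'q"
  assumes sym: "\<forall>i j. B$i$j = B$j$i" and irr: "irreducible_mat B" and ap: "aperiodic_mat B"
    and r: "\<forall>i. 0 \<le> r$i" "r \<noteq> 0" and c: "\<forall>j. 0 \<le> c$j" "c \<noteq> 0" and f: "fpc r c"
  shows "(\<forall>i. 0 < r$i) \<and> (\<forall>j. 0 < c$j)"
proof -
  obtain \<kappa> \<mu> where k: "\<kappa> > 0" "\<forall>i. Bc c i = \<kappa> * r$i powr (pp-1)"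
    and m: "\<mu> > 0" "\<forall>j. Br r j = \<mu> * c$j powr (pp-1)" using f unfolding fpc_def by blast
  have rpos: "r$i > 0 \<longleftrightarrow> Bc c i > 0" for i
    using k r(1)[rule_format, of i] by (auto simp: zero_less_mult_iff order_le_neq_trans)
  have cpos: "c$j > 0 \<longleftrightarrow> Br r j > 0" for j
    using m c(1)[rule_format, of j] by (auto simp: zero_less_mult_iff order_le_neq_trans)
  have R1: "c$j > 0" if "r$i > 0" "B$i$j > 0" for i j
  proof -
    have "B$i$j * r$i \<le> Br r j" unfolding Br_def
      by (rule member_le_sum[of i]) (use Bnn r in \<open>auto intro: mult_nonneg_nonneg\<close>)
    moreover have "B$i$j * r$i > 0" using that by simp
    ultimately show ?thesis using cpos by simp
  qed
  have R2: "r$j > 0" if "c$i > 0" "B$i$j > 0" for i j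
  proof -
    have "B$j$i * c$i \<le> Bc c j" unfolding Bc_def
      by (rule member_le_sum[of i]) (use Bnn c in \<open>auto intro: mult_nonneg_nonneg\<close>)
    moreover have "B$j$i * c$i > 0" using that sym by simp
    ultimately show ?thesis using rpos by simp
  qed
  have walk: "\<And>i. mpow B k $ i $ j > 0 \<Longrightarrow>
      (r$i > 0 \<longrightarrow> (if even k then r$j > 0 else c$j > 0)) \<and> (c$i > 0 \<longrightarrow> (if even k then c$j > 0 else r$j > 0))" for k j
  proof (induction k)
    case 0
    hence "i = j" by (simp add: mat_def split: if_splits)
    thus ?case by simp
  next
    case (Suc k)
    have "0 < (\<Sum>l\<in>UNIV. B$i$l * mpow B k $ l $ j)"
      using Suc.prems by (simp add: matrix_matrix_mult_def)
    then obtain l where l: "0 < B$i$l * mpow B k $ l $ j"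
      by (metis (mono_tags, lifting) not_le sum_nonpos)
    have Bl: "B$i$l > 0" using l Bnn[of i l] by (metis less_eq_real_def mult_zero_left less_irrefl)
    hence Ml: "mpow B k $ l $ j > 0" using l by (simp add: zero_less_mult_iff)
    note IH = Suc.IH[OF Ml]
    show ?case using IH R1[OF _ Bl] R2[OF _ Bl] by auto
  qed
  obtain i0 where i0: "r$i0 > 0"
  proof -
    obtain i where "r$i \<noteq> 0" using r(2) by (metis vec_eq_iff zero_index)
    hence "r$i > 0" using r(1)[rule_format, of i] by simp
    thus thesis by (rule that)
  qed
  obtain k where k0: "odd k" "mpow B k $ i0 $ i0 > 0"
  proof (rule ccontr)
    assume "\<not> thesis"
    hence ev: "\<And>k. k \<in> {k::nat. 0 < k \<and> 0 < mpow B k $ i0 $ i0} \<Longrightarrow> 2 dvd k" using that by auto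
    have "2 dvd Gcd {k::nat. 0 < k \<and> 0 < mpow B k $ i0 $ i0}" by (rule Gcd_greatest) (rule ev)
    thus False using ap unfolding aperiodic_mat_def by simp
  qed
  have ci0: "c$i0 > 0" using walk[OF k0(2)] i0 k0(1) by simp
  have "r$j > 0 \<and> c$j > 0" for j
  proof -
    obtain k where "mpow B k $ i0 $ j > 0" using irr unfolding irreducible_mat_def by blast
    from walk[OF this] i0 ci0 show ?thesis by (cases "even k") auto
  qed
  thus ?thesis by simp
qed

end

theorem theorem6:
  fixes B :: "real^'q^'q" and \<Delta> :: nat
  assumes "\<Delta> \<ge> 3"
    and "\<forall>i j. 0 \<le> B$i$j"
    and "\<forall>i j. B$i$j = B$j$i"
    and "irreducible_mat B"
  shows
    "(\<forall>r c. (r, c) \<in> PhiDom \<longrightarrow>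
        (tree_fixpoint B \<Delta> r c \<longleftrightarrow> crit_point (Phi B \<Delta>) PhiDom (r, c)))
   \<and> (\<forall>r c. (r, c) \<in> PhiDom \<longrightarrow>
        (crit_point (Phi B \<Delta>) PhiDom (r, c) \<longleftrightarrow> crit_point (Psi1 B \<Delta>) SimDom (Tmap \<Delta> (r, c))))
   \<and> Tmap \<Delta> ` (PhiDom :: ((real^'q) \<times> (real^'q)) set) = SimDom
   \<and> (\<forall>(r::real^'q) c r' c'. (r, c) \<in> PhiDom \<longrightarrow> (r', c') \<in> PhiDom \<longrightarrow> Tmap \<Delta> (r, c) = Tmap \<Delta> (r', c') \<longrightarrow>
        (\<exists>a>0. \<exists>b>0. r' = a *\<^sub>R r \<and> c' = b *\<^sub>R c))
   \<and> (\<forall>r c. crit_point (Phi B \<Delta>) PhiDom (r, c) \<longrightarrow> Phi B \<Delta> (r, c) = Psi1 B \<Delta> (Tmap \<Delta> (r, c)))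
   \<and> (ergodic_mat B \<longrightarrow>
        (\<forall>r c. local_max (Phi B \<Delta>) PhiDom (r, c) \<longrightarrow> (\<forall>i. 0 < r$i) \<and> (\<forall>j. 0 < c$j))
      \<and> (\<forall>a b. local_max (Psi1 B \<Delta>) SimDom (a, b) \<longrightarrow> (\<forall>i. 0 < a$i) \<and> (\<forall>j. 0 < b$j)))"
proof -
  interpret spin B \<Delta> using assms(1,2) by unfold_locales auto
  have P1: "\<forall>r c. (r, c) \<in> PhiDom \<longrightarrow> (tree_fixpoint B \<Delta> r c \<longleftrightarrow> crit_point (Phi B \<Delta>) PhiDom (r, c))"
  proof (intro allI impI)
    fix r c :: "real^'q" assume rc: "(r,c) \<in> PhiDom"
    hence "\<forall>i. 0 \<le> r$i" "\<forall>i. 0 \<le> c$i" by (auto simp: PhiDom_def)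
    thus "tree_fixpoint B \<Delta> r c \<longleftrightarrow> crit_point (Phi B \<Delta>) PhiDom (r, c)"
      using tree_fixpoint_iff crit_Phi_fpc[OF rc] by simp
  qed
  have crit_iff_Psi: "crit_point (Psi1 B \<Delta>) SimDom (a,b) \<longleftrightarrow> fpc (rt a) (rt b)" if ab: "(a,b) \<in> SimDom" for a b :: "real^'q"
    using fp_crit_Psi1[OF ab] crit_Psi1_fpc[OF ab] by blast
  have P2: "\<forall>r c. (r, c) \<in> PhiDom \<longrightarrow>
        (crit_point (Phi B \<Delta>) PhiDom (r, c) \<longleftrightarrow> crit_point (Psi1 B \<Delta>) SimDom (Tmap \<Delta> (r, c)))"
  proof (intro allI impI)
    fix r c :: "real^'q" assume rc: "(r,c) \<in> PhiDom"
    have T: "(fst (Tmap \<Delta> (r,c)), snd (Tmap \<Delta> (r,c))) \<in> SimDom" using Tmap_image rc by force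
    show "crit_point (Phi B \<Delta>) PhiDom (r, c) \<longleftrightarrow> crit_point (Psi1 B \<Delta>) SimDom (Tmap \<Delta> (r, c))"
      using crit_Phi_fpc[OF rc] Tmap_fpc[OF rc] crit_iff_Psi[OF T] by simp
  qed
  have P5: "\<forall>r c. crit_point (Phi B \<Delta>) PhiDom (r, c) \<longrightarrow> Phi B \<Delta> (r, c) = Psi1 B \<Delta> (Tmap \<Delta> (r, c))"
  proof (intro allI impI)
    fix r c :: "real^'q" assume cr: "crit_point (Phi B \<Delta>) PhiDom (r, c)"
    hence rc: "(r,c) \<in> PhiDom" by (simp add: crit_point_def)
    have T: "(fst (Tmap \<Delta> (r,c)), snd (Tmap \<Delta> (r,c))) \<in> SimDom" using Tmap_image rc by force
    have "fpc (rt (fst (Tmap \<Delta> (r,c)))) (rt (snd (Tmap \<Delta> (r,c))))"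
      using crit_Phi_fpc[OF rc] Tmap_fpc[OF rc] cr by simp
    from Psi1_fp[OF T this] show "Phi B \<Delta> (r, c) = Psi1 B \<Delta> (Tmap \<Delta> (r, c))"
      using Phi_G[OF rc] by simp
  qed
  have P6: "ergodic_mat B \<longrightarrow>
        (\<forall>r c. local_max (Phi B \<Delta>) PhiDom (r, c) \<longrightarrow> (\<forall>i. 0 < r$i) \<and> (\<forall>j. 0 < c$j))
      \<and> (\<forall>a b. local_max (Psi1 B \<Delta>) SimDom (a, b) \<longrightarrow> (\<forall>i. 0 < a$i) \<and> (\<forall>j. 0 < b$j))"
  proof (rule impI)
    assume erg: "ergodic_mat B"
    hence irr: "irreducible_mat B" and ap: "aperiodic_mat B" by (auto simp: ergodic_mat_def)
    have A: "(\<forall>i. 0 < r$i) \<and> (\<forall>j. 0 < c$j)" if lm: "local_max (Phi B \<Delta>) PhiDom (r, c)" for r c :: "real^'q"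
    proof -
      have rc: "(r,c) \<in> PhiDom" using lm by (simp add: local_max_def)
      have cr: "crit_point (Phi B \<Delta>) PhiDom (r, c)"
      proof (rule localmax_crit[OF lm])
        show "Phi B \<Delta> (r, c) \<noteq> \<infinity>" using Phi_eq[OF rc] by simp
        fix q :: "(real^'q) \<times> (real^'q)" and t :: real assume "q \<in> PhiDom" "0 \<le> t" "t \<le> 1"
        thus "(r, c) + t *\<^sub>R (q - (r, c)) \<in> PhiDom"
          using PhiDom_path[OF rc, of "fst q" "snd q" t] by (cases q) simp
      qed
      have "fpc r c" using crit_Phi_fpc[OF rc] cr by simp
      thus ?thesis using fpc_pos[OF assms(3) irr ap] rc by (auto simp: PhiDom_def)
    qed
    have Bq: "(\<forall>i. 0 < a$i) \<and> (\<forall>j. 0 < b$j)" if lm: "local_max (Psi1 B \<Delta>) SimDom (a, b)" for a b :: "real^'q"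
    proof -
      have ab: "(a,b) \<in> SimDom" using lm by (simp add: local_max_def)
      have cr: "crit_point (Psi1 B \<Delta>) SimDom (a, b)"
      proof (rule localmax_crit[OF lm])
        show "Psi1 B \<Delta> (a, b) \<noteq> \<infinity>" by (rule Psi1_ninf[OF ab])
        fix q :: "(real^'q) \<times> (real^'q)" and t :: real assume "q \<in> SimDom" "0 \<le> t" "t \<le> 1"
        thus "(a, b) + t *\<^sub>R (q - (a, b)) \<in> SimDom"
          using SimDom_path[OF ab, of "fst q" "snd q" t] by (cases q) simp
      qed
      have f: "fpc (rt a) (rt b)" using crit_iff_Psi[OF ab] cr by simp
      have a0: "\<forall>i. 0 \<le> a$i" "(\<Sum>i\<in>UNIV. a$i) = 1" "\<forall>j. 0 \<le> b$j" "(\<Sum>j\<in>UNIV. b$j) = 1"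
        using ab by (auto simp: SimDom_def)
      have nz: "rt v \<noteq> 0" if "(\<Sum>i\<in>UNIV. v$i) = 1" for v :: "real^'q"
      proof
        assume "rt v = 0"
        hence "v$i = 0" for i by (metis rt_def vec_lambda_beta zero_index powr_eq_0_iff)
        thus False using that by simp
      qed
      have "(\<forall>i. 0 < (rt a)$i) \<and> (\<forall>j. 0 < (rt b)$j)"
        using fpc_pos[OF assms(3) irr ap _ nz[OF a0(2)] _ nz[OF a0(4)] f] by (simp add: rt_def)
      hence "\<forall>i. a$i \<noteq> 0" "\<forall>j. b$j \<noteq> 0" by (auto simp: rt_def)
      thus ?thesis using a0 by (metis order_le_neq_trans)
    qed
    show "(\<forall>r c. local_max (Phi B \<Delta>) PhiDom (r, c) \<longrightarrow> (\<forall>i. 0 < r$i) \<and> (\<forall>j. 0 < c$j))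
      \<and> (\<forall>a b. local_max (Psi1 B \<Delta>) SimDom (a, b) \<longrightarrow> (\<forall>i. 0 < a$i) \<and> (\<forall>j. 0 < b$j))"
      using A Bq by blast
  qed
  show ?thesis using P1 P2 Tmap_image Tmap_inj P5 P6 by blast
qed

end
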